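(* Let $G$ be a stochastic game with generalized-reachability objective $\mathcal T$ of dimension $n$. If $s\in S_\Box$ is a Maximizer state, then $\mathsf{exit}[\mathfrak A](\{s\})=\mathfrak A(s)$.
   Context: Stochastic game $G=(S,S_\Box,S_\circ,s_0,A,\mathrm{Av},\delta)$: finite state set $S$ partitioned into Maximizer states $S_\Box$ and Minimizer states $S_\circ$, initial state $s_0$, finite action set $A$, nonempty $\mathrm{Av}(s)$, transition distributions $\delta(s,a)$. Strategies history-dependent randomized; $\mathbb P^{\sigma,\tau}_s$ measure on infinite paths from $s$. Objective $\mathcal T=(T_1,\dots,T_n)$, $T_i\subseteq S$; $\mathfrak A(s)$ = set of $\vec v\in\mathbb R^n_{\ge0}$ such that some Maximizer strategy $\sigma$ gives $\mathbb P^{\sigma,\tau}_s(\Diamond T_i)\ge\vec v_i$ for all Minimizer strategies $\tau$ and all $i$. Geometry: $\mathit{dwc}(X)=\{y\in\mathbb R^n_{\ge0}\mid\exists x\in X:y\le x\}$; $\mathbf 1=\mathit{dwc}(\{\vec1\})$; $c\cdot X=\{cx\mid x\in X\}$; $X+Y$ Minkowski sum; $\mathrm{conv}$ convex hull. For $f:S\to2^{\mathbb R^n}$ and $a\in\mathrm{Av}(s)$: $f(s,a):=\big(\mathit{dwc}(\{\mathbb 1_{\mathcal T}(s)\})+\sum_{s'}\delta(s,a)(s')\cdot f(s')\big)\cap\mathbf 1$ where $\mathbb 1_{\mathcal T}(s)_i=1$ iff $s\in T_i$. $(s,a)$ exits $T\subseteq S$ if some successor $s'$ with $\delta(s,a)(s')>0$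 lies outside $T$; $\mathsf{Exits}(T)$ is the set of such pairs with $s\in T$, $a\in\mathrm{Av}(s)$. Best exit: $\mathsf{exit}[f](T):=\big(\mathit{dwc}(\{\sum_{s\in T}\mathbb 1_{\mathcal T}(s)\})+\mathrm{conv}(\bigcup_{(s,a)\in\mathsf{Exits}(T),\,s\in S_\Box}f(s,a))\big)\cap\mathbf 1$, with $\bigcup_\emptyset=\{\vec 0\}$. *)

theory Defs
  imports "HOL-Analysis.Analysis" "HOL-Probability.Probability"
begin

record ('s, 'a) sgame =
  states :: "'s set"
  max_states :: "'s set"
  min_states :: "'s set"
  init :: 's
  actions :: "'a set"
  avail :: "'s \<Rightarrow> 'a set"
  trans :: "'s \<Rightarrow> 'a \<Rightarrow> 's pmf"

definition wf_game :: "('s, 'a) sgame \<Rightarrow> bool" where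
  "wf_game G \<longleftrightarrow>
     finite (states G) \<and> finite (actions G) \<and>
     max_states G \<union> min_states G = states G \<and>
     max_states G \<inter> min_states G = {} \<and>
     init G \<in> states G \<and>
     (\<forall>s\<in>states G. avail G s \<noteq> {} \<and> avail G s \<subseteq> actions G \<and>
        (\<forall>a\<in>avail G s. set_pmf (trans G s a) \<subseteq> states G))"

text \<open>A history is a list of past (state, chosen action) pairs together with the current state.
  Strategies are history-dependent and randomized.\<close>

type_synonym ('s, 'a) strategy = "('s \<times> 'a) list \<Rightarrow> 's \<Rightarrow> 'a pmf"

definition max_strategy :: "('s, 'a) sgame \<Rightarrow> ('s, 'a) strategy \<Rightarrow> bool" where
  "max_strategy G \<sigma> \<longleftrightarrow> (\<forall>h s. s \<in> max_states G \<longrightarrow> set_pmf (\<sigma> h s) \<subseteq> avail G s)"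

definition min_strategy :: "('s, 'a) sgame \<Rightarrow> ('s, 'a) strategy \<Rightarrow> bool" where
  "min_strategy G \<tau> \<longleftrightarrow> (\<forall>h s. s \<in> min_states G \<longrightarrow> set_pmf (\<tau> h s) \<subseteq> avail G s)"

fun reach_within :: "('s, 'a) sgame \<Rightarrow> ('s, 'a) strategy \<Rightarrow> ('s, 'a) strategy \<Rightarrow> 's set
      \<Rightarrow> nat \<Rightarrow> ('s \<times> 'a) list \<Rightarrow> 's \<Rightarrow> real" where
  "reach_within G \<sigma> \<tau> T 0 h s = (if s \<in> T then 1 else 0)"
| "reach_within G \<sigma> \<tau> T (Suc k) h s =
     (if s \<in> T then 1 else
        measure_pmf.expectation (if s \<in> max_states G then \<sigma> h s else \<tau> h s)
          (\<lambda>a. measure_pmf.expectation (trans G s a)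
                 (\<lambda>s'. reach_within G \<sigma> \<tau> T k (h @ [(s, a)]) s')))"

text \<open>P^{\<sigma>,\<tau>}_s(\<diamond>T): by continuity of measures, the limit (supremum) of the
  probabilities of reaching T within k steps.\<close>

definition prob_reach :: "('s, 'a) sgame \<Rightarrow> ('s, 'a) strategy \<Rightarrow> ('s, 'a) strategy \<Rightarrow> 's set
      \<Rightarrow> 's \<Rightarrow> real" where
  "prob_reach G \<sigma> \<tau> T s = (SUP k. reach_within G \<sigma> \<tau> T k [] s)"

definition nonneg_vec :: "real ^ 'n \<Rightarrow> bool" where
  "nonneg_vec v \<longleftrightarrow> (\<forall>i. 0 \<le> v $ i)"

definition achievable :: "('s, 'a) sgame \<Rightarrow> ('n \<Rightarrow> 's set) \<Rightarrow> 's \<Rightarrow> (real ^ 'n) set" where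
  "achievable G T s = {v. nonneg_vec v \<and>
     (\<exists>\<sigma>. max_strategy G \<sigma> \<and>
        (\<forall>\<tau>. min_strategy G \<tau> \<longrightarrow> (\<forall>i. prob_reach G \<sigma> \<tau> (T i) s \<ge> v $ i)))}"

definition dwc :: "(real ^ 'n) set \<Rightarrow> (real ^ 'n) set" where
  "dwc X = {y. nonneg_vec y \<and> (\<exists>x\<in>X. \<forall>i. y $ i \<le> x $ i)}"

definition unit_box :: "(real ^ 'n) set" where
  "unit_box = dwc {vec 1}"

definition msum :: "(real ^ 'n) set \<Rightarrow> (real ^ 'n) set \<Rightarrow> (real ^ 'n) set" where
  "msum X Y = {x + y | x y. x \<in> X \<and> y \<in> Y}"

definition sscale :: "real \<Rightarrow> (real ^ 'n) set \<Rightarrow> (real ^ 'n) set" where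
  "sscale c X = (\<lambda>x. c *\<^sub>R x) ` X"

definition msum_over :: "('b \<Rightarrow> (real ^ 'n) set) \<Rightarrow> 'b set \<Rightarrow> (real ^ 'n) set" where
  "msum_over F I = Finite_Set.fold (\<lambda>i Acc. msum (F i) Acc) {0} I"

definition ind_vec :: "('n \<Rightarrow> 's set) \<Rightarrow> 's \<Rightarrow> real ^ 'n" where
  "ind_vec T s = (\<chi> i. if s \<in> T i then 1 else 0)"

definition act_set :: "('s, 'a) sgame \<Rightarrow> ('n \<Rightarrow> 's set) \<Rightarrow> ('s \<Rightarrow> (real ^ 'n) set)
      \<Rightarrow> 's \<Rightarrow> 'a \<Rightarrow> (real ^ 'n) set" where
  "act_set G T f s a =
     msum (dwc {ind_vec T s})
          (msum_over (\<lambda>s'. sscale (pmf (trans G s a) s') (f s')) (states G)) \<inter> unit_box"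

definition exits :: "('s, 'a) sgame \<Rightarrow> 's set \<Rightarrow> ('s \<times> 'a) set" where
  "exits G U = {(s, a). s \<in> U \<and> a \<in> avail G s \<and>
                  (\<exists>s'. pmf (trans G s a) s' > 0 \<and> s' \<notin> U)}"

definition best_exit :: "('s, 'a) sgame \<Rightarrow> ('n \<Rightarrow> 's set) \<Rightarrow> ('s \<Rightarrow> (real ^ 'n) set)
      \<Rightarrow> 's set \<Rightarrow> (real ^ 'n) set" where
  "best_exit G T f U =
     (let E = {(s, a) \<in> exits G U. s \<in> max_states G};
          Y = (if E = {} then {0} else (\<Union>(s, a)\<in>E. act_set G T f s a))
      in msum (dwc {\<Sum>s\<in>U. ind_vec T s}) (convex hull Y) \<inter> unit_box)"

end

theory Submission
  imports Defs
begin


lemma msum_comm: "msum X Y = msum Y X"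
  unfolding msum_def by auto (metis add.commute)+

lemma msum_lcomm: "msum X (msum Y Z) = msum Y (msum X Z)"
  unfolding msum_def by (auto simp: add.left_commute) (metis add.left_commute)+

lemma msum_fold_commute: "comp_fun_commute (\<lambda>i Acc. msum (F i) Acc)"
  unfolding comp_fun_commute_def by (auto simp: fun_eq_iff msum_lcomm)

lemma msum_over_empty[simp]: "msum_over F {} = {0}"
  by (simp add: msum_over_def)

lemma msum_over_insert:
  "finite I \<Longrightarrow> i \<notin> I \<Longrightarrow> msum_over F (insert i I) = msum (F i) (msum_over F I)"
  unfolding msum_over_def
  using comp_fun_commute_on.fold_insert[OF msum_fold_commute[unfolded comp_fun_commute_def'], of i I]
  by simp

lemma msum_over_char:
  assumes "finite I"
  shows "msum_over F I = {\<Sum>i\<in>I. f i | f. \<forall>i\<in>I. f i \<in> F i}"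
  using assms
proof (induction I rule: finite_induct)
  case empty
  then show ?case by auto
next
  case (insert i I)
  show ?case
  proof (intro set_eqI iffI)
    fix x assume "x \<in> msum_over F (insert i I)"
    then obtain y f where y: "y \<in> F i" and f: "\<forall>j\<in>I. f j \<in> F j" and x: "x = y + (\<Sum>j\<in>I. f j)"
      unfolding msum_over_insert[OF insert(1,2)] insert(3) msum_def by auto
    let ?g = "f(i := y)"
    have "x = (\<Sum>j\<in>insert i I. ?g j)"
      using insert(1,2) x by (auto intro!: sum.cong)
    moreover have "\<forall>j\<in>insert i I. ?g j \<in> F j" using f y by auto
    ultimately show "x \<in> {\<Sum>i\<in>insert i I. f i | f. \<forall>i\<in>insert i I. f i \<in> F i}" by blast
  next
    fix x assume "x \<in> {\<Sum>i\<in>insert i I. f i | f. \<forall>i\<in>insert i I. f i \<in> F i}"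
    then obtain f where f: "\<forall>j\<in>insert i I. f j \<in> F j" and x: "x = (\<Sum>j\<in>insert i I. f j)" by auto
    have "x = f i + (\<Sum>j\<in>I. f j)" using x insert(1,2) by simp
    then show "x \<in> msum_over F (insert i I)"
      unfolding msum_over_insert[OF insert(1,2)] insert(3) msum_def using f by blast
  qed
qed

lemma convex_msum: "convex X \<Longrightarrow> convex Y \<Longrightarrow> convex (msum X Y)"
proof -
  assume "convex X" "convex Y"
  from convex_sums[OF this] show ?thesis
    by (rule back_subst[where P=convex]) (auto simp: msum_def)
qed

lemma convex_sscale: "convex X \<Longrightarrow> convex (sscale c X)"
  unfolding sscale_def by (rule convex_scaling)

lemma convex_msum_over:
  assumes "finite I" "\<And>i. i \<in> I \<Longrightarrow> convex (F i)"
  shows "convex (msum_over F I)"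
  using assms
proof (induction I rule: finite_induct)
  case empty
  then show ?case by simp
next
  case (insert i I)
  then show ?case by (simp add: msum_over_insert convex_msum)
qed

lemma dwc_single: "dwc {x} = {y. nonneg_vec y \<and> (\<forall>i. y $ i \<le> x $ i)}"
  unfolding dwc_def by auto

lemma convex_dwc_single: "convex (dwc {x})"
  unfolding dwc_single nonneg_vec_def
proof (rule convexI)
  fix y z :: "real ^'a" and u v :: real
  assume "y \<in> {y. (\<forall>i. 0 \<le> y $ i) \<and> (\<forall>i. y $ i \<le> x $ i)}"
    "z \<in> {y. (\<forall>i. 0 \<le> y $ i) \<and> (\<forall>i. y $ i \<le> x $ i)}" and uv: "0 \<le> u" "0 \<le> v" "u + v = 1"
  then have a: "\<forall>i. 0 \<le> y $ i \<and> y $ i \<le> x $ i" "\<forall>i. 0 \<le> z $ i \<and> z $ i \<le> x $ i" by auto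
  have "0 \<le> u * y $ i + v * z $ i \<and> u * y $ i + v * z $ i \<le> x $ i" for i
  proof -
    have "u * y $ i + v * z $ i \<le> u * x $ i + v * x $ i"
      using a uv by (intro add_mono mult_left_mono) auto
    also have "\<dots> = x $ i" using uv(3) by (metis distrib_right mult_1)
    finally show ?thesis using a uv by auto
  qed
  then show "u *\<^sub>R y + v *\<^sub>R z \<in> {y. (\<forall>i. 0 \<le> y $ i) \<and> (\<forall>i. y $ i \<le> x $ i)}" by auto
qed

lemma convex_unit_box: "convex (unit_box :: (real ^'n) set)"
  unfolding unit_box_def by (rule convex_dwc_single)

lemma unit_box_iff: "x \<in> unit_box \<longleftrightarrow> (\<forall>i. 0 \<le> x $ i \<and> x $ i \<le> 1)"
  unfolding unit_box_def dwc_single nonneg_vec_def by auto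


lemma hull_avg:
  fixes c :: "'j \<Rightarrow> 'v::real_vector"
  assumes "finite A" "\<And>j. j \<in> A \<Longrightarrow> 0 \<le> w j" "\<And>j. j \<in> A \<Longrightarrow> 0 < w j \<Longrightarrow> c j \<in> D"
    "convex D" "0 < (\<Sum>j\<in>A. w j)"
  shows "(1 / (\<Sum>j\<in>A. w j)) *\<^sub>R (\<Sum>j\<in>A. w j *\<^sub>R c j) \<in> D"
proof -
  let ?A = "{j\<in>A. 0 < w j}"
  let ?s = "\<Sum>j\<in>A. w j"
  have z: "\<And>j. j\<in>A \<Longrightarrow> \<not> 0 < w j \<Longrightarrow> w j = 0"
    using assms(2) by (metis less_eq_real_def)
  have s1: "?s = (\<Sum>j\<in>?A. w j)"
  proof -
    have "(\<Sum>j\<in>?A. w j) = (\<Sum>j\<in>A. if 0 < w j then w j else 0)"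
      by (rule sum.inter_filter[OF assms(1)])
    also have "\<dots> = ?s" by (rule sum.cong) (use z in auto)
    finally show ?thesis by simp
  qed
  have s2: "(\<Sum>j\<in>A. w j *\<^sub>R c j) = (\<Sum>j\<in>?A. w j *\<^sub>R c j)"
  proof -
    have "(\<Sum>j\<in>?A. w j *\<^sub>R c j) = (\<Sum>j\<in>A. if 0 < w j then w j *\<^sub>R c j else 0)"
      by (rule sum.inter_filter[OF assms(1)])
    also have "\<dots> = (\<Sum>j\<in>A. w j *\<^sub>R c j)" by (rule sum.cong) (use z in auto)
    finally show ?thesis by simp
  qed
  have fA: "finite ?A" using assms(1) by simp
  have "(\<Sum>j\<in>?A. (w j / ?s) *\<^sub>R c j) \<in> D"
  proof (rule convex_sum[OF fA assms(4)])
    show "(\<Sum>i\<in>?A. w i / ?s) = 1" using assms(5) unfolding s1 sum_divide_distrib[symmetric] by simp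
    show "\<And>i. i \<in> ?A \<Longrightarrow> 0 \<le> w i / ?s" using assms(5) by simp
    show "\<And>i. i \<in> ?A \<Longrightarrow> c i \<in> D" using assms(3) by simp
  qed
  moreover have "(\<Sum>j\<in>?A. (w j / ?s) *\<^sub>R c j) = (1 / ?s) *\<^sub>R (\<Sum>j\<in>A. w j *\<^sub>R c j)"
    unfolding s2 scaleR_sum_right by (simp add: divide_inverse mult.commute)
  ultimately show ?thesis by simp
qed

lemma lim_closure:
  fixes c :: "'j \<Rightarrow> 'v::real_normed_vector"
  assumes "convex D" "\<And>K. finite (A K)" "\<And>K j. j \<in> A K \<Longrightarrow> 0 \<le> w K j"
    "\<And>K j. j \<in> A K \<Longrightarrow> 0 < w K j \<Longrightarrow> c j \<in> D"
    "(\<lambda>K. \<Sum>j\<in>A K. w K j) \<longlonglongrightarrow> s" "0 < s"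
    "(\<lambda>K. \<Sum>j\<in>A K. w K j *\<^sub>R c j) \<longlonglongrightarrow> V"
  shows "(1 / s) *\<^sub>R V \<in> closure D"
proof (rule Lim_in_closed_set[where f="\<lambda>K. (1 / (\<Sum>j\<in>A K. w K j)) *\<^sub>R (\<Sum>j\<in>A K. w K j *\<^sub>R c j)"])
  have ev: "eventually (\<lambda>K. 0 < (\<Sum>j\<in>A K. w K j)) sequentially"
    using order_tendstoD(1)[OF assms(5,6)] .
  have "(1 / (\<Sum>j\<in>A K. w K j)) *\<^sub>R (\<Sum>j\<in>A K. w K j *\<^sub>R c j) \<in> closure D"
    if "0 < (\<Sum>j\<in>A K. w K j)" for K
    using hull_avg[of "A K" "w K" c D, OF assms(2) assms(3) assms(4) assms(1) that] closure_subset
    by (rule subsetD[rotated])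
  then show "eventually (\<lambda>K. (1 / (\<Sum>j\<in>A K. w K j)) *\<^sub>R (\<Sum>j\<in>A K. w K j *\<^sub>R c j) \<in> closure D) sequentially"
    using eventually_mono[OF ev] by simp
  show "(\<lambda>K. (1 / (\<Sum>j\<in>A K. w K j)) *\<^sub>R (\<Sum>j\<in>A K. w K j *\<^sub>R c j)) \<longlonglongrightarrow> (1 / s) *\<^sub>R V"
    by (intro tendsto_intros assms(5,7)) (use assms(6) in simp)
  show "closed (closure D)" by simp
  show "sequentially \<noteq> bot" by simp
qed

lemma sigma_convex:
  fixes c :: "'j \<Rightarrow> 'v::euclidean_space"
  assumes C: "convex C"
    and I: "\<And>K. finite (I K)" "mono I"
    and q: "\<And>j. 0 \<le> q j"
    and cC: "\<And>j. c j \<in> C"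
    and Slim: "(\<lambda>K. \<Sum>j\<in>I K. q j) \<longlonglongrightarrow> 1"
    and Zlim: "(\<lambda>K. \<Sum>j\<in>I K. q j *\<^sub>R c j) \<longlonglongrightarrow> Z"
  shows "Z \<in> C"
proof -
  define J where "J = {j. (\<exists>K. j \<in> I K) \<and> 0 < q j}"
  define D where "D = convex hull (c ` J)"
  have cD: "convex D" unfolding D_def by simp
  have DC: "D \<subseteq> C" unfolding D_def using C cC by (intro hull_minimal) auto
  have cJ: "j \<in> J \<Longrightarrow> c j \<in> D" for j unfolding D_def by (intro hull_inc) auto
  have cJ': "\<And>K j. j \<in> I K \<Longrightarrow> 0 < q j \<Longrightarrow> c j \<in> D" using cJ unfolding J_def by blast
  have "(1/1) *\<^sub>R Z \<in> closure D"
    by (rule lim_closure[OF cD, where A=I and w="\<lambda>K. q" and c=c]) (use I(1) q Slim Zlim cJ' in auto)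
  then have ZD: "Z \<in> closure D" by simp
  have "J \<noteq> {}"
  proof
    assume "J = {}"
    have qz: "q j = 0" if "j \<in> I K" for j K
    proof -
      have "\<not> 0 < q j" using \<open>J = {}\<close> that unfolding J_def by blast
      then show ?thesis using q[of j] by linarith
    qed
    then have "(\<Sum>j\<in>I K. q j) = 0" for K by simp
    then show False using Slim LIMSEQ_unique[OF Slim, of 0] by simp
  qed
  then have "D \<noteq> {}" unfolding D_def by simp
  then obtain z where zr: "z \<in> rel_interior D" using rel_interior_eq_empty[OF cD] by blast
  then have "z \<in> convex hull (c ` J)" using rel_interior_subset D_def by blast
  then have "\<exists>U u. finite U \<and> U \<subseteq> c ` J \<and> (\<forall>x\<in>U. 0 \<le> u x) \<and> sum u U = 1 \<and> (\<Sum>v\<in>U. u v *\<^sub>R v) = z"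
    unfolding convex_hull_explicit by simp
  then obtain U u where "finite U \<and> U \<subseteq> c ` J \<and> (\<forall>x\<in>U. 0 \<le> u x) \<and> sum u U = 1 \<and> (\<Sum>v\<in>U. u v *\<^sub>R v) = z"
    by blast
  then have U: "finite U" "U \<subseteq> c ` J" "\<forall>x\<in>U. 0 \<le> u x" "sum u U = 1"
     "(\<Sum>v\<in>U. u v *\<^sub>R v) = z" by auto
  define g where "g v = (SOME j. j \<in> J \<and> c j = v)" for v
  have g: "g v \<in> J \<and> c (g v) = v" if "v \<in> U" for v
  proof -
    have "\<exists>j. j \<in> J \<and> c j = v" using U(2) that by auto
    then show ?thesis unfolding g_def by (rule someI_ex)
  qed
  have ginj: "inj_on g U"
  proof (rule inj_onI)
    fix x y assume xy: "x \<in> U" "y \<in> U" "g x = g y"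
    have "x = c (g x)" using g[OF xy(1)] by simp
    also have "\<dots> = c (g y)" using xy(3) by simp
    also have "\<dots> = y" using g[OF xy(2)] by simp
    finally show "x = y" .
  qed
  define F where "F = g ` U"
  define \<mu> where "\<mu> j = (if j \<in> F then u (c j) else 0)" for j
  have finF: "finite F" using U(1) F_def by simp
  have FJ: "F \<subseteq> J" using g F_def by auto
  have mu_nn: "0 \<le> \<mu> j" for j unfolding \<mu>_def F_def using U(3) g by auto
  have sum_mu: "(\<Sum>j\<in>F. \<mu> j) = 1"
    unfolding F_def sum.reindex[OF ginj] using U(4) g by (simp add: \<mu>_def F_def)
  have z_mu: "(\<Sum>j\<in>F. \<mu> j *\<^sub>R c j) = z"
    unfolding F_def sum.reindex[OF ginj] using U(5) g by (simp add: \<mu>_def F_def)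
  obtain K0 where K0: "F \<subseteq> I K0"
  proof -
    have "\<forall>j\<in>F. \<exists>K. j \<in> I K" using FJ J_def by auto
    then have "\<exists>k. \<forall>j\<in>F. j \<in> I (k j)" by (rule bchoice)
    then obtain k where k0: "\<forall>j\<in>F. j \<in> I (k j)" by blast
    then have k: "\<And>j. j \<in> F \<Longrightarrow> j \<in> I (k j)" by blast
    have "F \<subseteq> I (Max (k ` F))"
    proof
      fix j assume "j \<in> F"
      then have "k j \<le> Max (k ` F)" using finF by auto
      then have "I (k j) \<subseteq> I (Max (k ` F))" by (rule monoD[OF I(2)])
      then show "j \<in> I (Max (k ` F))" using k[OF \<open>j \<in> F\<close>] by (rule subsetD)
    qed
    then show ?thesis using that by blast
  qed
  define R where "R = (\<lambda>j. q j / \<mu> j) ` {j\<in>F. 0 < \<mu> j}"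
  define \<epsilon> where "\<epsilon> = Min (insert (1/2) R)"
  have finR: "finite R" unfolding R_def using finF by simp
  have Rpos: "r \<in> R \<Longrightarrow> 0 < r" for r unfolding R_def using FJ J_def by auto
  have eps_pos: "0 < \<epsilon>" unfolding \<epsilon>_def using finR Rpos by (subst Min_gr_iff) auto
  have eps_le: "\<epsilon> \<le> 1/2" unfolding \<epsilon>_def by (rule Min_le) (use finR in auto)
  have eps_mu: "\<epsilon> * \<mu> j \<le> q j" for j
  proof (cases "j \<in> F \<and> 0 < \<mu> j")
    case True
    then have "q j / \<mu> j \<in> insert (1/2) R" unfolding R_def by blast
    then have "\<epsilon> \<le> q j / \<mu> j" unfolding \<epsilon>_def by (rule Min_le[rotated]) (use finR in simp)
    then show ?thesis using True by (simp add: pos_le_divide_eq)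
  next
    case False
    then have "\<mu> j = 0" using mu_nn[of j] unfolding \<mu>_def by (auto simp: order.order_iff_strict)
    then show ?thesis using q by simp
  qed
  define q' where "q' j = q j - \<epsilon> * \<mu> j" for j
  have q'nn: "0 \<le> q' j" for j using eps_mu[of j] q'_def by simp
  have q'J: "0 < q' j \<Longrightarrow> j \<in> I K \<Longrightarrow> c j \<in> D" for j K
  proof -
    assume a: "0 < q' j" "j \<in> I K"
    have "0 \<le> \<epsilon> * \<mu> j" using eps_pos mu_nn[of j] by simp
    then have "0 < q j" using a(1) unfolding q'_def by linarith
    then show "c j \<in> D" using a(2) by (intro cJ) (auto simp: J_def)
  qed
  have FIK: "F \<subseteq> I (K + K0)" for K
  proof -
    have "I K0 \<subseteq> I (K + K0)" using monoD[OF I(2), of K0 "K + K0"] by simp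
    then show ?thesis using K0 by (rule subset_trans[rotated])
  qed
  have sq': "(\<Sum>j\<in>I (K + K0). q' j) = (\<Sum>j\<in>I (K + K0). q j) - \<epsilon>" for K
  proof -
    have "(\<Sum>j\<in>I (K + K0). \<mu> j) = (\<Sum>j\<in>F. \<mu> j)"
      using sum.mono_neutral_right[OF I(1) FIK, where g=\<mu>] by (simp add: \<mu>_def)
    then show ?thesis unfolding q'_def sum_subtractf sum_distrib_left[symmetric] sum_mu by simp
  qed
  have zq': "(\<Sum>j\<in>I (K + K0). q' j *\<^sub>R c j) = (\<Sum>j\<in>I (K + K0). q j *\<^sub>R c j) - \<epsilon> *\<^sub>R z" for K
  proof -
    have "(\<Sum>j\<in>I (K + K0). \<mu> j *\<^sub>R c j) = (\<Sum>j\<in>F. \<mu> j *\<^sub>R c j)"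
      using sum.mono_neutral_right[OF I(1) FIK, where g="\<lambda>j. \<mu> j *\<^sub>R c j"] by (simp add: \<mu>_def)
    then have eq: "(\<Sum>j\<in>I (K + K0). \<mu> j *\<^sub>R c j) = z" using z_mu by simp
    have "(\<Sum>j\<in>I (K + K0). (\<epsilon> * \<mu> j) *\<^sub>R c j) = \<epsilon> *\<^sub>R z"
      by (subst eq[symmetric]) (simp add: scaleR_sum_right)
    then show ?thesis unfolding q'_def scaleR_diff_left sum_subtractf by simp
  qed
  have "(1 / (1 - \<epsilon>)) *\<^sub>R (Z - \<epsilon> *\<^sub>R z) \<in> closure D"
  proof (rule lim_closure[OF cD, where A="\<lambda>K. I (K + K0)" and w="\<lambda>K. q'"])
    show "(\<lambda>K. \<Sum>j\<in>I (K + K0). q' j) \<longlonglongrightarrow> 1 - \<epsilon>"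
      unfolding sq' by (intro tendsto_intros LIMSEQ_ignore_initial_segment[OF Slim])
    show "(\<lambda>K. \<Sum>j\<in>I (K + K0). q' j *\<^sub>R c j) \<longlonglongrightarrow> Z - \<epsilon> *\<^sub>R z"
      unfolding zq' by (intro tendsto_intros LIMSEQ_ignore_initial_segment[OF Zlim])
  qed (use I(1) q'nn q'J eps_le in auto)
  then have "(1 / (1 - \<epsilon>)) *\<^sub>R (Z - \<epsilon> *\<^sub>R z) - \<epsilon> *\<^sub>R ((1 / (1 - \<epsilon>)) *\<^sub>R (Z - \<epsilon> *\<^sub>R z) - z) \<in> rel_interior D"
    using rel_interior_closure_convex_shrink[OF cD zr _ eps_pos] eps_le by auto
  moreover have "(1 / (1 - \<epsilon>)) *\<^sub>R (Z - \<epsilon> *\<^sub>R z) - \<epsilon> *\<^sub>R ((1 / (1 - \<epsilon>)) *\<^sub>R (Z - \<epsilon> *\<^sub>R z) - z) = Z"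
  proof -
    have e1: "1 - \<epsilon> \<noteq> 0" using eps_le by simp
    define W where "W = Z - \<epsilon> *\<^sub>R z"
    define a where "a = 1 / (1 - \<epsilon>)"
    have "a *\<^sub>R W - \<epsilon> *\<^sub>R (a *\<^sub>R W - z) = (a - \<epsilon> * a) *\<^sub>R W + \<epsilon> *\<^sub>R z"
      by (simp add: algebra_simps)
    also have "a - \<epsilon> * a = 1" unfolding a_def using e1 by (simp add: field_simps)
    also have "1 *\<^sub>R W + \<epsilon> *\<^sub>R z = Z" unfolding W_def by simp
    finally show ?thesis unfolding W_def a_def .
  qed
  ultimately show ?thesis using rel_interior_subset DC by auto
qed


locale game =
  fixes G :: "('s, 'a) sgame"
  assumes wf: "wf_game G"
begin

abbreviation "S \<equiv> states G"
abbreviation "Mx \<equiv> max_states G"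
abbreviation "Mn \<equiv> min_states G"

lemma finS: "finite S" using wf by (simp add: wf_game_def)
lemma finAct: "finite (actions G)" using wf by (simp add: wf_game_def)
lemma S_eq: "S = Mx \<union> Mn" using wf by (simp add: wf_game_def)
lemma MxMn: "Mx \<inter> Mn = {}" using wf by (simp add: wf_game_def)
lemma avail_ne: "t \<in> S \<Longrightarrow> avail G t \<noteq> {}" using wf by (simp add: wf_game_def)
lemma avail_sub: "t \<in> S \<Longrightarrow> avail G t \<subseteq> actions G" using wf by (simp add: wf_game_def)
lemma fin_avail: "t \<in> S \<Longrightarrow> finite (avail G t)" using avail_sub finAct finite_subset by blast
lemma trans_sub: "t \<in> S \<Longrightarrow> a \<in> avail G t \<Longrightarrow> set_pmf (trans G t a) \<subseteq> S"
  using wf by (simp add: wf_game_def)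

definition str :: "('s, 'a) strategy \<Rightarrow> ('s, 'a) strategy \<Rightarrow> ('s \<times> 'a) list \<Rightarrow> 's \<Rightarrow> 'a pmf" where
  "str \<sigma> \<tau> h t = (if t \<in> Mx then \<sigma> h t else \<tau> h t)"

lemma str_sub:
  assumes "max_strategy G \<sigma>" "min_strategy G \<tau>" "t \<in> S"
  shows "set_pmf (str \<sigma> \<tau> h t) \<subseteq> avail G t"
  using assms S_eq unfolding str_def max_strategy_def min_strategy_def by (auto; blast)

lemma exp_sum:
  assumes "finite A" "set_pmf M \<subseteq> A"
  shows "measure_pmf.expectation M f = (\<Sum>a\<in>A. pmf M a * f a)"
  using integral_measure_pmf_real[of A M f] assms by (auto simp: mult.commute)

lemma reach_unfold:
  assumes "max_strategy G \<sigma>" "min_strategy G \<tau>" "t \<in> S"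
  shows "reach_within G \<sigma> \<tau> X (Suc k) h t = (if t \<in> X then 1 else
     (\<Sum>a\<in>avail G t. pmf (str \<sigma> \<tau> h t) a *
        (\<Sum>s'\<in>S. pmf (trans G t a) s' * reach_within G \<sigma> \<tau> X k (h @ [(t, a)]) s')))"
proof -
  have 1: "measure_pmf.expectation (str \<sigma> \<tau> h t) F = (\<Sum>a\<in>avail G t. pmf (str \<sigma> \<tau> h t) a * F a)" for F
    by (rule exp_sum[OF fin_avail[OF assms(3)] str_sub[OF assms]])
  have 2: "measure_pmf.expectation (trans G t a) F = (\<Sum>s'\<in>S. pmf (trans G t a) s' * F s')"
    if "a \<in> avail G t" for a F
    by (rule exp_sum[OF finS trans_sub[OF assms(3) that]])
  show ?thesis
    unfolding reach_within.simps str_def[symmetric] 1 using 2 by (auto intro!: sum.cong)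
qed

lemma reach_bounds:
  assumes "max_strategy G \<sigma>" "min_strategy G \<tau>" "t \<in> S"
  shows "0 \<le> reach_within G \<sigma> \<tau> X k h t \<and> reach_within G \<sigma> \<tau> X k h t \<le> 1"
  using assms(3)
proof (induction k arbitrary: h t)
  case 0
  then show ?case by auto
next
  case (Suc k)
  let ?p = "str \<sigma> \<tau> h t"
  have in1: "0 \<le> (\<Sum>s'\<in>S. pmf (trans G t a) s' * reach_within G \<sigma> \<tau> X k (h @ [(t, a)]) s') \<and>
     (\<Sum>s'\<in>S. pmf (trans G t a) s' * reach_within G \<sigma> \<tau> X k (h @ [(t, a)]) s') \<le> 1"
    if a: "a \<in> avail G t" for a
  proof -
    have "(\<Sum>s'\<in>S. pmf (trans G t a) s' * reach_within G \<sigma> \<tau> X k (h @ [(t, a)]) s') \<le> (\<Sum>s'\<in>S. pmf (trans G t a) s')"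
      by (intro sum_mono) (use Suc.IH in \<open>auto intro: mult_left_le\<close>)
    also have "\<dots> = 1" by (rule sum_pmf_eq_1[OF finS trans_sub[OF Suc.prems a]])
    finally show ?thesis using Suc.IH by (auto intro!: sum_nonneg)
  qed
  have "(\<Sum>a\<in>avail G t. pmf ?p a *
        (\<Sum>s'\<in>S. pmf (trans G t a) s' * reach_within G \<sigma> \<tau> X k (h @ [(t, a)]) s')) \<le> (\<Sum>a\<in>avail G t. pmf ?p a)"
    by (intro sum_mono) (use in1 in \<open>auto intro: mult_left_le\<close>)
  also have "\<dots> = 1" by (rule sum_pmf_eq_1[OF fin_avail[OF Suc.prems] str_sub[OF assms(1,2) Suc.prems]])
  finally show ?case unfolding reach_unfold[OF assms(1,2) Suc.prems] using in1 by (auto intro!: sum_nonneg)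
qed

lemma reach_mono_Suc:
  assumes "max_strategy G \<sigma>" "min_strategy G \<tau>" "t \<in> S"
  shows "reach_within G \<sigma> \<tau> X k h t \<le> reach_within G \<sigma> \<tau> X (Suc k) h t"
  using assms(3)
proof (induction k arbitrary: h t)
  case 0
  then show ?case using reach_bounds[OF assms(1,2) 0] by (simp del: reach_within.simps(2))
      (simp add: reach_within.simps(2)[of G \<sigma> \<tau> X 0] reach_unfold[OF assms(1,2)] )
next
  case (Suc k)
  show ?case
    unfolding reach_unfold[OF assms(1,2) Suc.prems, of _ "Suc k"] reach_unfold[OF assms(1,2) Suc.prems, of _ k]
    using Suc.IH trans_sub[OF Suc.prems]
    by (auto intro!: sum_mono mult_left_mono)
qed

lemma reach_incseq:
  assumes "max_strategy G \<sigma>" "min_strategy G \<tau>" "t \<in> S"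
  shows "incseq (\<lambda>k. reach_within G \<sigma> \<tau> X k h t)"
  using reach_mono_Suc[OF assms] by (simp add: incseq_Suc_iff)

lemma reach_lim:
  assumes "max_strategy G \<sigma>" "min_strategy G \<tau>" "t \<in> S"
  shows "(\<lambda>k. reach_within G \<sigma> \<tau> X k h t) \<longlonglongrightarrow> (SUP k. reach_within G \<sigma> \<tau> X k h t)"
  by (rule LIMSEQ_incseq_SUP[OF _ reach_incseq[OF assms]])
     (use reach_bounds[OF assms] in \<open>auto intro!: bdd_aboveI[where M=1]\<close>)

lemma prob_reach_lim:
  assumes "max_strategy G \<sigma>" "min_strategy G \<tau>" "t \<in> S"
  shows "(\<lambda>k. reach_within G \<sigma> \<tau> X k [] t) \<longlonglongrightarrow> prob_reach G \<sigma> \<tau> X t"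
  unfolding prob_reach_def by (rule reach_lim[OF assms])

lemma prob_reach_ge:
  assumes "max_strategy G \<sigma>" "min_strategy G \<tau>" "t \<in> S"
  shows "reach_within G \<sigma> \<tau> X k [] t \<le> prob_reach G \<sigma> \<tau> X t"
  unfolding prob_reach_def
  by (rule cSUP_upper) (use reach_bounds[OF assms] in \<open>auto intro!: bdd_aboveI[where M=1]\<close>)

lemma prob_reach_bounds:
  assumes "max_strategy G \<sigma>" "min_strategy G \<tau>" "t \<in> S"
  shows "0 \<le> prob_reach G \<sigma> \<tau> X t \<and> prob_reach G \<sigma> \<tau> X t \<le> 1"
proof
  show "0 \<le> prob_reach G \<sigma> \<tau> X t"
    using prob_reach_ge[OF assms, of X 0] reach_bounds[OF assms, of X 0 "[]"] by linarith
  show "prob_reach G \<sigma> \<tau> X t \<le> 1"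
    using reach_bounds[OF assms] unfolding prob_reach_def by (auto intro!: cSUP_least)
qed

end


lemma reach_shift_fun:
  "reach_within G \<sigma> \<tau> X k (p @ g) = reach_within G (\<lambda>g. \<sigma> (p @ g)) (\<lambda>g. \<tau> (p @ g)) X k g"
proof (induction k arbitrary: g)
  case 0
  then show ?case by (simp add: fun_eq_iff)
next
  case (Suc k)
  show ?case
  proof
    fix t
    have "reach_within G \<sigma> \<tau> X k (p @ g @ [(t, a)]) = reach_within G (\<lambda>g. \<sigma> (p @ g)) (\<lambda>g. \<tau> (p @ g)) X k (g @ [(t, a)])" for a
      using Suc.IH[of "g @ [(t, a)]"] by simp
    then show "reach_within G \<sigma> \<tau> X (Suc k) (p @ g) t = reach_within G (\<lambda>g. \<sigma> (p @ g)) (\<lambda>g. \<tau> (p @ g)) X (Suc k) g t"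
      by simp
  qed
qed

lemma reach_shift:
  "reach_within G \<sigma> \<tau> X k (p @ g) t = reach_within G (\<lambda>g. \<sigma> (p @ g)) (\<lambda>g. \<tau> (p @ g)) X k g t"
  by (simp add: reach_shift_fun)

definition start :: "('s \<times> 'a) list \<Rightarrow> 's \<Rightarrow> 's" where
  "start g t = (if g = [] then t else fst (hd g))"

lemma start_snoc: "start (g @ [(t, a)]) t' = start g t"
  unfolding start_def by (cases g) auto

lemma reach_agree:
  assumes "\<And>g t. start g t = uu \<Longrightarrow> \<sigma> g t = \<sigma>' g t \<and> \<tau> g t = \<tau>' g t"
  shows "start g t = uu \<Longrightarrow> reach_within G \<sigma> \<tau> X k g t = reach_within G \<sigma>' \<tau>' X k g t"
proof (induction k arbitrary: g t)
  case 0
  then show ?case by simp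
next
  case (Suc k)
  have IH: "reach_within G \<sigma> \<tau> X k (g @ [(t, a)]) = reach_within G \<sigma>' \<tau>' X k (g @ [(t, a)])" for a
  proof
    fix s'
    show "reach_within G \<sigma> \<tau> X k (g @ [(t, a)]) s' = reach_within G \<sigma>' \<tau>' X k (g @ [(t, a)]) s'"
      using Suc.IH[of "g @ [(t, a)]" s'] Suc.prems by (simp add: start_snoc)
  qed
  have eq: "\<sigma> g t = \<sigma>' g t" "\<tau> g t = \<tau>' g t" using assms[OF Suc.prems] by auto
  show ?case by (simp add: IH eq)
qed

context game
begin

definition dflt :: "('s, 'a) strategy" where
  "dflt h t = return_pmf (SOME a. a \<in> avail G t)"

lemma dflt_max: "max_strategy G dflt"
  unfolding max_strategy_def dflt_def using avail_ne S_eq by (auto simp: some_in_eq)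

lemma dflt_min: "min_strategy G dflt"
  unfolding min_strategy_def dflt_def using avail_ne S_eq by (auto simp: some_in_eq)

lemma shift_max: "max_strategy G \<sigma> \<Longrightarrow> max_strategy G (\<lambda>g. \<sigma> (p @ g))"
  unfolding max_strategy_def by auto
lemma shift_min: "min_strategy G \<tau> \<Longrightarrow> min_strategy G (\<lambda>g. \<tau> (p @ g))"
  unfolding min_strategy_def by auto

definition hp :: "('s, 'a) strategy \<Rightarrow> ('s \<times> 'a) list \<Rightarrow> real" where
  "hp \<sigma> h = (\<Prod>j<length h. if fst (h ! j) \<in> Mx then pmf (\<sigma> (take j h) (fst (h ! j))) (snd (h ! j)) else 1)"

lemma hp_Nil[simp]: "hp \<sigma> [] = 1" by (simp add: hp_def)

lemma hp_snoc: "hp \<sigma> (h @ [(t, a)]) = hp \<sigma> h * (if t \<in> Mx then pmf (\<sigma> h t) a else 1)"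
proof -
  have "hp \<sigma> (h @ [(t, a)]) = (\<Prod>j<length h. if fst ((h @ [(t, a)]) ! j) \<in> Mx then pmf (\<sigma> (take j (h @ [(t, a)])) (fst ((h @ [(t, a)]) ! j))) (snd ((h @ [(t, a)]) ! j)) else 1)
     * (if t \<in> Mx then pmf (\<sigma> h t) a else 1)"
    unfolding hp_def by (simp add: prod.lessThan_Suc nth_append)
  also have "(\<Prod>j<length h. if fst ((h @ [(t, a)]) ! j) \<in> Mx then pmf (\<sigma> (take j (h @ [(t, a)])) (fst ((h @ [(t, a)]) ! j))) (snd ((h @ [(t, a)]) ! j)) else 1) = hp \<sigma> h"
    unfolding hp_def by (intro prod.cong) (auto simp: nth_append)
  finally show ?thesis .
qed

lemma hp_nonneg: "0 \<le> hp \<sigma> h"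
  unfolding hp_def by (intro prod_nonneg) auto

definition mixp :: "real \<Rightarrow> 'x pmf \<Rightarrow> 'x pmf \<Rightarrow> 'x pmf" where
  "mixp \<alpha> p1 p2 = bind_pmf (bernoulli_pmf \<alpha>) (\<lambda>b. if b then p1 else p2)"

lemma pmf_mixp: "0 \<le> \<alpha> \<Longrightarrow> \<alpha> \<le> 1 \<Longrightarrow> pmf (mixp \<alpha> p1 p2) x = \<alpha> * pmf p1 x + (1 - \<alpha>) * pmf p2 x"
  unfolding mixp_def pmf_bind by simp

lemma set_mixp: "set_pmf (mixp \<alpha> p1 p2) \<subseteq> set_pmf p1 \<union> set_pmf p2"
  unfolding mixp_def by (auto split: if_splits)

definition kmix :: "real \<Rightarrow> ('s, 'a) strategy \<Rightarrow> ('s, 'a) strategy \<Rightarrow> ('s, 'a) strategy" where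
  "kmix l \<sigma>1 \<sigma>2 h t = (let W = l * hp \<sigma>1 h + (1 - l) * hp \<sigma>2 h in
     if W = 0 then \<sigma>1 h t else mixp (l * hp \<sigma>1 h / W) (\<sigma>1 h t) (\<sigma>2 h t))"

lemma kmix_max:
  assumes "max_strategy G \<sigma>1" "max_strategy G \<sigma>2"
  shows "max_strategy G (kmix l \<sigma>1 \<sigma>2)"
  using assms set_mixp unfolding max_strategy_def kmix_def Let_def by (smt (verit) Un_subset_iff subset_trans)

lemma kmix_pmf:
  assumes l: "0 \<le> l" "l \<le> 1"
  shows "(l * hp \<sigma>1 h + (1 - l) * hp \<sigma>2 h) * pmf (kmix l \<sigma>1 \<sigma>2 h t) a
       = l * hp \<sigma>1 h * pmf (\<sigma>1 h t) a + (1 - l) * hp \<sigma>2 h * pmf (\<sigma>2 h t) a"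
proof -
  define W where "W = l * hp \<sigma>1 h + (1 - l) * hp \<sigma>2 h"
  have n1: "0 \<le> l * hp \<sigma>1 h" and n2: "0 \<le> (1 - l) * hp \<sigma>2 h" using l hp_nonneg by auto
  show ?thesis
  proof (cases "W = 0")
    case True
    then have "l * hp \<sigma>1 h = 0" "(1 - l) * hp \<sigma>2 h = 0" using n1 n2 W_def by linarith+
    then have "l * hp \<sigma>1 h * pmf (\<sigma>1 h t) a = 0" "(1 - l) * hp \<sigma>2 h * pmf (\<sigma>2 h t) a = 0"
      by (metis mult_zero_left)+
    then have "l * hp \<sigma>1 h * pmf (\<sigma>1 h t) a + (1 - l) * hp \<sigma>2 h * pmf (\<sigma>2 h t) a = 0" by linarith
    then show ?thesis using True unfolding W_def[symmetric] by simp
  next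
    case False
    then have Wp: "0 < W" using n1 n2 W_def by linarith
    have a0: "0 \<le> l * hp \<sigma>1 h / W" using n1 Wp by simp
    have a1: "l * hp \<sigma>1 h / W \<le> 1" using n2 Wp W_def by (simp add: divide_le_eq_1)
    have b: "1 - l * hp \<sigma>1 h / W = (1 - l) * hp \<sigma>2 h / W" using Wp W_def by (simp add: field_simps)
    have "W * pmf (kmix l \<sigma>1 \<sigma>2 h t) a = W * (l * hp \<sigma>1 h / W * pmf (\<sigma>1 h t) a + (1 - l * hp \<sigma>1 h / W) * pmf (\<sigma>2 h t) a)"
      unfolding kmix_def Let_def W_def[symmetric] using False pmf_mixp[OF a0 a1] by simp
    also have "\<dots> = l * hp \<sigma>1 h * pmf (\<sigma>1 h t) a + (1 - l) * hp \<sigma>2 h * pmf (\<sigma>2 h t) a"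
      unfolding b using Wp by (simp add: field_simps)
    finally show ?thesis unfolding W_def .
  qed
qed

lemma sum_comb:
  fixes c1 c2 :: real
  shows "c1 * (\<Sum>a\<in>A. p1 a * (\<Sum>s\<in>B. d a s * r1 a s)) + c2 * (\<Sum>a\<in>A. p2 a * (\<Sum>s\<in>B. d a s * r2 a s))
   = (\<Sum>a\<in>A. \<Sum>s\<in>B. d a s * (c1 * p1 a * r1 a s + c2 * p2 a * r2 a s))"
  by (simp add: sum_distrib_left sum.distrib algebra_simps)

lemma sum_comb2:
  fixes c1 c2 :: real
  shows "c1 * (\<Sum>a\<in>A. p a * (\<Sum>s\<in>B. d a s * r1 a s)) + c2 * (\<Sum>a\<in>A. p a * (\<Sum>s\<in>B. d a s * r2 a s))
   = (\<Sum>a\<in>A. \<Sum>s\<in>B. p a * d a s * (c1 * r1 a s + c2 * r2 a s))"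
  by (simp add: sum_distrib_left sum.distrib algebra_simps)

lemma kuhn:
  assumes s1: "max_strategy G \<sigma>1" and s2: "max_strategy G \<sigma>2" and tau: "min_strategy G \<tau>"
    and l: "0 \<le> l" "l \<le> 1" and t: "t \<in> S"
  shows "(l * hp \<sigma>1 h + (1 - l) * hp \<sigma>2 h) * reach_within G (kmix l \<sigma>1 \<sigma>2) \<tau> X k h t
       = l * hp \<sigma>1 h * reach_within G \<sigma>1 \<tau> X k h t + (1 - l) * hp \<sigma>2 h * reach_within G \<sigma>2 \<tau> X k h t"
  using t
proof (induction k arbitrary: h t)
  case 0
  then show ?case by (simp add: algebra_simps)
next
  case (Suc k)
  let ?m = "kmix l \<sigma>1 \<sigma>2"
  have sm: "max_strategy G ?m" by (rule kmix_max[OF s1 s2])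
  let ?W = "\<lambda>h. l * hp \<sigma>1 h + (1 - l) * hp \<sigma>2 h"
  show ?case
  proof (cases "t \<in> X")
    case True
    then show ?thesis by (simp add: algebra_simps)
  next
    case False
    let ?A = "avail G t"
    let ?R = "\<lambda>\<sigma> a s'. reach_within G \<sigma> \<tau> X k (h @ [(t, a)]) s'"
    let ?d = "\<lambda>a s'. pmf (trans G t a) s'"
    have IH: "?W (h @ [(t, a)]) * ?R ?m a s' = l * hp \<sigma>1 (h @ [(t, a)]) * ?R \<sigma>1 a s' + (1 - l) * hp \<sigma>2 (h @ [(t, a)]) * ?R \<sigma>2 a s'"
      if "a \<in> ?A" "s' \<in> S" "?d a s' \<noteq> 0" for a s'
      using Suc.IH[OF that(2)] .
    show ?thesis
    proof (cases "t \<in> Mx")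
      case tM: True
      have Wp: "?W h * pmf (str ?m \<tau> h t) a = ?W (h @ [(t, a)])"
        "l * hp \<sigma>1 (h @ [(t, a)]) = l * hp \<sigma>1 h * pmf (str \<sigma>1 \<tau> h t) a"
        "(1 - l) * hp \<sigma>2 (h @ [(t, a)]) = (1 - l) * hp \<sigma>2 h * pmf (str \<sigma>2 \<tau> h t) a" for a
        using kmix_pmf[OF l, of \<sigma>1 h \<sigma>2 t a] tM unfolding hp_snoc str_def
        by (auto simp: algebra_simps)
      have "?W h * reach_within G ?m \<tau> X (Suc k) h t
          = (\<Sum>a\<in>?A. \<Sum>s'\<in>S. ?d a s' * (?W (h @ [(t, a)]) * ?R ?m a s'))"
        unfolding reach_unfold[OF sm tau Suc.prems] using False
        by (simp add: sum_distrib_left Wp(1)[symmetric] mult_ac)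
      also have "\<dots> = (\<Sum>a\<in>?A. \<Sum>s'\<in>S. ?d a s' * (l * hp \<sigma>1 (h @ [(t, a)]) * ?R \<sigma>1 a s' + (1 - l) * hp \<sigma>2 (h @ [(t, a)]) * ?R \<sigma>2 a s'))"
      proof (intro sum.cong refl)
        fix a s' assume "a \<in> ?A" "s' \<in> S"
        then show "?d a s' * (?W (h @ [(t, a)]) * ?R ?m a s') = ?d a s' * (l * hp \<sigma>1 (h @ [(t, a)]) * ?R \<sigma>1 a s' + (1 - l) * hp \<sigma>2 (h @ [(t, a)]) * ?R \<sigma>2 a s')"
          using IH by (cases "?d a s' = 0") auto
      qed
      also have "\<dots> = l * hp \<sigma>1 h * reach_within G \<sigma>1 \<tau> X (Suc k) h t + (1 - l) * hp \<sigma>2 h * reach_within G \<sigma>2 \<tau> X (Suc k) h t"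
        unfolding reach_unfold[OF s1 tau Suc.prems] reach_unfold[OF s2 tau Suc.prems] Wp(2,3) using False
        by (simp only: if_False sum_comb)
      finally show ?thesis .
    next
      case tM: False
      have hs: "hp \<sigma> (h @ [(t, a)]) = hp \<sigma> h" for \<sigma> a using tM by (simp add: hp_snoc)
      have st: "str \<sigma> \<tau> h t = \<tau> h t" for \<sigma> using tM by (simp add: str_def)
      have "?W h * reach_within G ?m \<tau> X (Suc k) h t
          = (\<Sum>a\<in>?A. \<Sum>s'\<in>S. pmf (\<tau> h t) a * ?d a s' * (?W (h @ [(t, a)]) * ?R ?m a s'))"
        unfolding reach_unfold[OF sm tau Suc.prems] using False
        by (simp add: sum_distrib_left hs st mult_ac)
      also have "\<dots> = (\<Sum>a\<in>?A. \<Sum>s'\<in>S. pmf (\<tau> h t) a * ?d a s' * (l * hp \<sigma>1 (h @ [(t, a)]) * ?R \<sigma>1 a s' + (1 - l) * hp \<sigma>2 (h @ [(t, a)]) * ?R \<sigma>2 a s'))"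
      proof (intro sum.cong refl)
        fix a s' assume "a \<in> ?A" "s' \<in> S"
        then show "pmf (\<tau> h t) a * ?d a s' * (?W (h @ [(t, a)]) * ?R ?m a s') = pmf (\<tau> h t) a * ?d a s' * (l * hp \<sigma>1 (h @ [(t, a)]) * ?R \<sigma>1 a s' + (1 - l) * hp \<sigma>2 (h @ [(t, a)]) * ?R \<sigma>2 a s')"
          using IH by (cases "?d a s' = 0") auto
      qed
      also have "\<dots> = l * hp \<sigma>1 h * reach_within G \<sigma>1 \<tau> X (Suc k) h t + (1 - l) * hp \<sigma>2 h * reach_within G \<sigma>2 \<tau> X (Suc k) h t"
        unfolding reach_unfold[OF s1 tau Suc.prems] reach_unfold[OF s2 tau Suc.prems] hs st using False
        by (simp only: if_False sum_comb2)
      finally show ?thesis .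
    qed
  qed
qed

lemma kuhn_prob:
  assumes s1: "max_strategy G \<sigma>1" and s2: "max_strategy G \<sigma>2" and tau: "min_strategy G \<tau>"
    and l: "0 \<le> l" "l \<le> 1" and t: "t \<in> S"
  shows "prob_reach G (kmix l \<sigma>1 \<sigma>2) \<tau> X t = l * prob_reach G \<sigma>1 \<tau> X t + (1 - l) * prob_reach G \<sigma>2 \<tau> X t"
proof -
  have eq: "reach_within G (kmix l \<sigma>1 \<sigma>2) \<tau> X k [] t = l * reach_within G \<sigma>1 \<tau> X k [] t + (1 - l) * reach_within G \<sigma>2 \<tau> X k [] t" for k
    using kuhn[OF assms, of "[]" X k] by simp
  have "(\<lambda>k. reach_within G (kmix l \<sigma>1 \<sigma>2) \<tau> X k [] t) \<longlonglongrightarrow> l * prob_reach G \<sigma>1 \<tau> X t + (1 - l) * prob_reach G \<sigma>2 \<tau> X t"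
    unfolding eq by (intro tendsto_intros prob_reach_lim[OF s1 tau t] prob_reach_lim[OF s2 tau t])
  moreover have "(\<lambda>k. reach_within G (kmix l \<sigma>1 \<sigma>2) \<tau> X k [] t) \<longlonglongrightarrow> prob_reach G (kmix l \<sigma>1 \<sigma>2) \<tau> X t"
    by (rule prob_reach_lim[OF kmix_max[OF s1 s2] tau t])
  ultimately show ?thesis using LIMSEQ_unique by blast
qed

lemma convex_achievable:
  fixes T :: "'n::finite \<Rightarrow> 's set"
  assumes t: "t \<in> S"
  shows "convex (achievable G T t)"
proof (rule convexI)
  fix x y :: "real ^'n::finite" and u v :: real
  assume x: "x \<in> achievable G T t" and y: "y \<in> achievable G T t" and uv: "0 \<le> u" "0 \<le> v" "u + v = 1"
  obtain \<sigma>1 where s1: "max_strategy G \<sigma>1" "\<forall>\<tau>. min_strategy G \<tau> \<longrightarrow> (\<forall>i. prob_reach G \<sigma>1 \<tau> (T i) t \<ge> x $ i)"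
    using x unfolding achievable_def by auto
  obtain \<sigma>2 where s2: "max_strategy G \<sigma>2" "\<forall>\<tau>. min_strategy G \<tau> \<longrightarrow> (\<forall>i. prob_reach G \<sigma>2 \<tau> (T i) t \<ge> y $ i)"
    using y unfolding achievable_def by auto
  have v: "v = 1 - u" using uv by simp
  have nn: "nonneg_vec (u *\<^sub>R x + v *\<^sub>R y)"
    using x y uv unfolding achievable_def nonneg_vec_def by auto
  have "prob_reach G (kmix u \<sigma>1 \<sigma>2) \<tau> (T i) t \<ge> (u *\<^sub>R x + v *\<^sub>R y) $ i"
    if tau: "min_strategy G \<tau>" for \<tau> i
  proof -
    have "(u *\<^sub>R x + v *\<^sub>R y) $ i = u * x $ i + (1 - u) * y $ i" using v by simp
    also have "\<dots> \<le> u * prob_reach G \<sigma>1 \<tau> (T i) t + (1 - u) * prob_reach G \<sigma>2 \<tau> (T i) t"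
      using s1(2) s2(2) tau uv v by (intro add_mono mult_left_mono) auto
    also have "\<dots> = prob_reach G (kmix u \<sigma>1 \<sigma>2) \<tau> (T i) t"
      using kuhn_prob[OF s1(1) s2(1) tau _ _ t, of u "T i"] uv v by simp
    finally show ?thesis .
  qed
  then show "u *\<^sub>R x + v *\<^sub>R y \<in> achievable G T t"
    unfolding achievable_def using nn kmix_max[OF s1(1) s2(1)] by blast
qed

end


locale loopctx = game G for G :: "('s, 'a) sgame" +
  fixes s :: 's and \<sigma> :: "('s, 'a) strategy"
  assumes sM: "s \<in> max_states G" and sig: "max_strategy G \<sigma>"
begin

lemma sS: "s \<in> S" using sM S_eq by auto

definition "L = {a \<in> avail G s. set_pmf (trans G s a) \<subseteq> {s}}"
definition "B = avail G s - L"
definition hist :: "'a list \<Rightarrow> ('s \<times> 'a) list" where "hist ls = map (\<lambda>l. (s, l)) ls"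
definition "P ls = hp \<sigma> (hist ls)"
definition "LS k = {ls. set ls \<subseteq> L \<and> length ls = k}"
definition "pa ls a = pmf (\<sigma> (hist ls) s) a"
definition "ex ls = (\<Sum>b\<in>B. pa ls b)"

lemma finL: "finite L" unfolding L_def using fin_avail[OF sS] by simp
lemma finB: "finite B" unfolding B_def using fin_avail[OF sS] by simp
lemma LB: "L \<union> B = avail G s" "L \<inter> B = {}" unfolding L_def B_def by auto
lemma finLS: "finite (LS k)" unfolding LS_def using finL by (rule finite_lists_length_eq)

lemma hist_snoc: "hist (ls @ [l]) = hist ls @ [(s, l)]" by (simp add: hist_def)

lemma P_Nil[simp]: "P [] = 1" by (simp add: P_def hist_def)
lemma P_snoc: "P (ls @ [l]) = P ls * pa ls l"
  unfolding P_def hist_snoc hp_snoc pa_def using sM by simp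
lemma P_nonneg: "0 \<le> P ls" unfolding P_def by (rule hp_nonneg)
lemma pa_nonneg: "0 \<le> pa ls a" unfolding pa_def by simp

lemma pa_sum: "(\<Sum>l\<in>L. pa ls l) + ex ls = 1"
proof -
  have "set_pmf (\<sigma> (hist ls) s) \<subseteq> avail G s" using sig sM unfolding max_strategy_def by auto
  then have "(\<Sum>a\<in>avail G s. pa ls a) = 1" unfolding pa_def
    by (rule sum_pmf_eq_1[OF fin_avail[OF sS]])
  then show ?thesis unfolding ex_def LB(1)[symmetric] using sum.union_disjoint[OF finL finB LB(2), of "pa ls"] by linarith
qed

lemma loop_trans: "l \<in> L \<Longrightarrow> trans G s l = return_pmf s"
  unfolding L_def using set_pmf_subset_singleton[of "trans G s l" s] by auto

lemma LS_0: "LS 0 = {[]}" unfolding LS_def by auto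

lemma sum_LS_Suc: "(\<Sum>ls\<in>LS (Suc k). f ls) = (\<Sum>ls\<in>LS k. \<Sum>l\<in>L. f (ls @ [l]))"
proof -
  have eq: "LS (Suc k) = (\<lambda>(ls, l). ls @ [l]) ` (LS k \<times> L)"
  proof (intro set_eqI iffI)
    fix x assume "x \<in> LS (Suc k)"
    then have x: "set x \<subseteq> L" "length x = Suc k" unfolding LS_def by auto
    then have "x = butlast x @ [last x]" by (metis append_butlast_last_id list.size(3) nat.distinct(1))
    moreover have "butlast x \<in> LS k" "last x \<in> L" using x unfolding LS_def
      by (auto dest: in_set_butlastD) (metis Zero_not_Suc last_in_set list.size(3) subsetD)
    ultimately show "x \<in> (\<lambda>(ls, l). ls @ [l]) ` (LS k \<times> L)" by force
  next
    fix x assume "x \<in> (\<lambda>(ls, l). ls @ [l]) ` (LS k \<times> L)"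
    then show "x \<in> LS (Suc k)" unfolding LS_def by auto
  qed
  have inj: "inj_on (\<lambda>(ls, l). ls @ [l]) (LS k \<times> L)" by (auto simp: inj_on_def)
  show ?thesis unfolding eq sum.reindex[OF inj] sum.cartesian_product by (simp add: split_def)
qed

lemma mass: "(\<Sum>j<k. \<Sum>ls\<in>LS j. P ls * ex ls) + (\<Sum>ls\<in>LS k. P ls) = 1"
proof (induction k)
  case 0
  then show ?case by (simp add: LS_0)
next
  case (Suc k)
  have "(\<Sum>ls\<in>LS k. P ls) = (\<Sum>ls\<in>LS k. P ls * ex ls) + (\<Sum>ls\<in>LS (Suc k). P ls)"
  proof -
    have "(\<Sum>ls\<in>LS k. P ls) = (\<Sum>ls\<in>LS k. P ls * ((\<Sum>l\<in>L. pa ls l) + ex ls))" using pa_sum by simp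
    also have "\<dots> = (\<Sum>ls\<in>LS k. P ls * ex ls) + (\<Sum>ls\<in>LS k. \<Sum>l\<in>L. P (ls @ [l]))"
      by (simp add: P_snoc algebra_simps sum.distrib sum_distrib_left)
    finally show ?thesis unfolding sum_LS_Suc .
  qed
  then show ?case using Suc.IH by simp
qed

lemma mass_le: "(\<Sum>j<k. \<Sum>ls\<in>LS j. P ls * ex ls) \<le> 1"
  using mass[of k] sum_nonneg[of "LS k" P] P_nonneg by force

definition "pre ls b = hist ls @ [(s, b)]"
definition "shs (\<rho> :: ('s, 'a) strategy) p = (\<lambda>g. \<rho> (p @ g))"

definition Xv :: "('s, 'a) strategy \<Rightarrow> 's set \<Rightarrow> 'a list \<Rightarrow> real" where
  "Xv \<tau> X ls = (\<Sum>b\<in>B. pa ls b * (\<Sum>s'\<in>S. pmf (trans G s b) s' *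
       prob_reach G (shs \<sigma> (pre ls b)) (shs \<tau> (pre ls b)) X s'))"

lemma one_layer:
  assumes tau: "min_strategy G \<tau>" and sX: "s \<notin> X"
  shows "reach_within G \<sigma> \<tau> X (Suc m) (hist ls) s \<le> Xv \<tau> X ls + (\<Sum>l\<in>L. pa ls l * reach_within G \<sigma> \<tau> X m (hist (ls @ [l])) s)"
proof -
  have str: "str \<sigma> \<tau> (hist ls) s = \<sigma> (hist ls) s" using sM by (simp add: str_def)
  let ?f = "\<lambda>a. pa ls a * (\<Sum>s'\<in>S. pmf (trans G s a) s' * reach_within G \<sigma> \<tau> X m (hist ls @ [(s, a)]) s')"
  have "reach_within G \<sigma> \<tau> X (Suc m) (hist ls) s = (\<Sum>a\<in>avail G s. ?f a)"
    unfolding reach_unfold[OF sig tau sS] str pa_def using sX by simp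
  also have "\<dots> = (\<Sum>a\<in>L. ?f a) + (\<Sum>a\<in>B. ?f a)"
    unfolding LB(1)[symmetric] by (rule sum.union_disjoint[OF finL finB LB(2)])
  also have "(\<Sum>a\<in>L. ?f a) = (\<Sum>l\<in>L. pa ls l * reach_within G \<sigma> \<tau> X m (hist (ls @ [l])) s)"
  proof (intro sum.cong refl)
    fix l assume l: "l \<in> L"
    have "(\<Sum>s'\<in>S. pmf (trans G s l) s' * reach_within G \<sigma> \<tau> X m (hist ls @ [(s, l)]) s')
        = (\<Sum>s'\<in>S. if s' = s then reach_within G \<sigma> \<tau> X m (hist ls @ [(s, l)]) s' else 0)"
      unfolding loop_trans[OF l] by (intro sum.cong) (auto simp: indicator_def)
    also have "\<dots> = reach_within G \<sigma> \<tau> X m (hist (ls @ [l])) s"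
      using sS finS by (simp add: hist_snoc)
    finally show "?f l = pa ls l * reach_within G \<sigma> \<tau> X m (hist (ls @ [l])) s" by simp
  qed
  also have "(\<Sum>a\<in>B. ?f a) \<le> Xv \<tau> X ls"
  proof -
    have le: "reach_within G \<sigma> \<tau> X m (hist ls @ [(s, b)]) s' \<le> prob_reach G (shs \<sigma> (pre ls b)) (shs \<tau> (pre ls b)) X s'"
      if b: "b \<in> B" and s': "s' \<in> S" for b s'
    proof -
      have "reach_within G \<sigma> \<tau> X m (hist ls @ [(s, b)]) s' = reach_within G (shs \<sigma> (pre ls b)) (shs \<tau> (pre ls b)) X m [] s'"
        using reach_shift[of G \<sigma> \<tau> X m "pre ls b" "[]" s'] unfolding pre_def shs_def by simp
      also have "\<dots> \<le> prob_reach G (shs \<sigma> (pre ls b)) (shs \<tau> (pre ls b)) X s'"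
        unfolding shs_def by (rule prob_reach_ge[OF shift_max[OF sig] shift_min[OF tau] s'])
      finally show ?thesis .
    qed
    show ?thesis unfolding Xv_def
      by (intro sum_mono mult_left_mono[OF _ pa_nonneg]) (auto intro!: mult_left_mono le)
  qed
  finally show ?thesis by linarith
qed

lemma layers:
  assumes tau: "min_strategy G \<tau>" and sX: "s \<notin> X"
  shows "k \<le> K \<Longrightarrow> reach_within G \<sigma> \<tau> X K [] s \<le> (\<Sum>j<k. \<Sum>ls\<in>LS j. P ls * Xv \<tau> X ls)
     + (\<Sum>ls\<in>LS k. P ls * reach_within G \<sigma> \<tau> X (K - k) (hist ls) s)"
proof (induction k)
  case 0
  then show ?case by (simp add: LS_0 hist_def)
next
  case (Suc k)
  then have kK: "k < K" by simp
  then have KS: "K - k = Suc (K - Suc k)" by simp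
  have "(\<Sum>ls\<in>LS k. P ls * reach_within G \<sigma> \<tau> X (K - k) (hist ls) s)
      \<le> (\<Sum>ls\<in>LS k. P ls * (Xv \<tau> X ls + (\<Sum>l\<in>L. pa ls l * reach_within G \<sigma> \<tau> X (K - Suc k) (hist (ls @ [l])) s)))"
    unfolding KS by (intro sum_mono mult_left_mono one_layer[OF tau sX] P_nonneg)
  also have "\<dots> = (\<Sum>ls\<in>LS k. P ls * Xv \<tau> X ls) + (\<Sum>ls\<in>LS (Suc k). P ls * reach_within G \<sigma> \<tau> X (K - Suc k) (hist ls) s)"
    unfolding sum_LS_Suc by (simp add: P_snoc algebra_simps sum.distrib sum_distrib_left)
  finally show ?case using Suc.IH[OF Suc_leD[OF Suc.prems]] by simp
qed

lemma reach_bound: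
  assumes tau: "min_strategy G \<tau>" and sX: "s \<notin> X"
  shows "reach_within G \<sigma> \<tau> X K [] s \<le> (\<Sum>j<K. \<Sum>ls\<in>LS j. P ls * Xv \<tau> X ls)"
  using layers[OF tau sX order_refl, of K] sX by simp

end


context game
begin

lemma reach_in_X: "t \<in> X \<Longrightarrow> reach_within G \<sigma> \<tau> X k h t = 1"
  by (cases k) auto

lemma prob_reach_in_X: "t \<in> X \<Longrightarrow> prob_reach G \<sigma> \<tau> X t = 1"
  unfolding prob_reach_def by (simp add: reach_in_X)

definition st1 :: "'s \<Rightarrow> 'a \<Rightarrow> ('s \<Rightarrow> ('s, 'a) strategy) \<Rightarrow> ('s, 'a) strategy" where
  "st1 s a \<sigma>s h t = (case h of [] \<Rightarrow> (if t = s then return_pmf a else dflt h t) | x # g \<Rightarrow> \<sigma>s (start g t) g t)"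

lemma st1_max:
  assumes "a \<in> avail G s" "\<And>s'. max_strategy G (\<sigma>s s')"
  shows "max_strategy G (st1 s a \<sigma>s)"
  using assms dflt_max unfolding max_strategy_def st1_def by (auto split: list.split)

lemma sum_return: "finite A \<Longrightarrow> a \<in> A \<Longrightarrow> (\<Sum>a'\<in>A. indicator {a'} a * F a') = (F a :: real)"
proof -
  assume "finite A" "a \<in> A"
  have "(\<Sum>a'\<in>A. indicator {a'} a * F a') = (\<Sum>a'\<in>A. if a' = a then F a' else 0)"
    by (intro sum.cong) (auto simp: indicator_def)
  also have "\<dots> = F a" using \<open>finite A\<close> \<open>a \<in> A\<close> by (simp add: sum.delta')
  finally show ?thesis .
qed

lemma one_step:
  assumes sM: "s \<in> Mx" and a: "a \<in> avail G s" and ss: "\<And>s'. max_strategy G (\<sigma>s s')"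
    and tau: "min_strategy G \<tau>" and sX: "s \<notin> X"
  shows "prob_reach G (st1 s a \<sigma>s) \<tau> X s
     = (\<Sum>s'\<in>S. pmf (trans G s a) s' * prob_reach G (\<sigma>s s') (\<lambda>g. \<tau> ((s, a) # g)) X s')"
proof -
  have sS: "s \<in> S" using sM S_eq by auto
  let ?m = "st1 s a \<sigma>s"
  have m: "max_strategy G ?m" by (rule st1_max[OF a ss])
  have tau': "min_strategy G (\<lambda>g. \<tau> ((s, a) # g))" using shift_min[OF tau, of "[(s, a)]"] by simp
  have agree: "reach_within G ?m \<tau> X k [(s, a)] s' = reach_within G (\<sigma>s s') (\<lambda>g. \<tau> ((s, a) # g)) X k [] s'" for k s'
  proof -
    have "reach_within G ?m \<tau> X k ([(s, a)] @ []) s' = reach_within G (\<lambda>g. ?m ([(s, a)] @ g)) (\<lambda>g. \<tau> ([(s, a)] @ g)) X k [] s'"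
      by (rule reach_shift)
    also have "\<dots> = reach_within G (\<sigma>s s') (\<lambda>g. \<tau> ((s, a) # g)) X k [] s'"
      by (rule reach_agree[where uu=s']) (auto simp: st1_def start_def)
    finally show ?thesis by simp
  qed
  have eq: "reach_within G ?m \<tau> X (Suc k) [] s = (\<Sum>s'\<in>S. pmf (trans G s a) s' * reach_within G (\<sigma>s s') (\<lambda>g. \<tau> ((s, a) # g)) X k [] s')" for k
  proof -
    have "str ?m \<tau> [] s = return_pmf a" using sM by (simp add: str_def st1_def)
    then show ?thesis unfolding reach_unfold[OF m tau sS] using sX
      by (simp add: sum_return[OF fin_avail[OF sS] a] agree)
  qed
  have "(\<lambda>k. reach_within G ?m \<tau> X (Suc k) [] s) \<longlonglongrightarrow> prob_reach G ?m \<tau> X s"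
    using prob_reach_lim[OF m tau sS] by (rule LIMSEQ_Suc)
  moreover have "(\<lambda>k. reach_within G ?m \<tau> X (Suc k) [] s) \<longlonglongrightarrow> (\<Sum>s'\<in>S. pmf (trans G s a) s' * prob_reach G (\<sigma>s s') (\<lambda>g. \<tau> ((s, a) # g)) X s')"
    unfolding eq by (intro tendsto_intros prob_reach_lim[OF ss tau']) auto
  ultimately show ?thesis using LIMSEQ_unique by blast
qed

lemma zero_ach: "t \<in> S \<Longrightarrow> 0 \<in> achievable G T t"
  unfolding achievable_def nonneg_vec_def using dflt_max prob_reach_bounds[OF dflt_max] by auto

lemma ach_box: "t \<in> S \<Longrightarrow> x \<in> achievable G T t \<Longrightarrow> 0 \<le> x $ i \<and> x $ i \<le> 1"
proof -
  assume t: "t \<in> S" and x: "x \<in> achievable G T t"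
  then obtain \<sigma> where s: "max_strategy G \<sigma>" "x $ i \<le> prob_reach G \<sigma> dflt (T i) t" and "0 \<le> x $ i"
    unfolding achievable_def nonneg_vec_def using dflt_min by blast
  then show ?thesis using prob_reach_bounds[OF s(1) dflt_min t, of "T i"] by linarith
qed

lemma ach_box': "t \<in> S \<Longrightarrow> x \<in> achievable G T t \<Longrightarrow> x \<in> unit_box"
  using ach_box unfolding unit_box_iff by blast

lemma combine_ach:
  fixes T :: "'n::finite \<Rightarrow> 's set"
  assumes t: "t \<in> S" and c: "c \<in> achievable G T t" and d: "d \<in> dwc {ind_vec T t}" and box: "d + c \<in> unit_box"
  shows "d + c \<in> achievable G T t"
proof -
  obtain \<sigma>c where sc: "max_strategy G \<sigma>c" "\<And>\<tau> i. min_strategy G \<tau> \<Longrightarrow> prob_reach G \<sigma>c \<tau> (T i) t \<ge> c $ i"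
    using c unfolding achievable_def by auto
  have "prob_reach G \<sigma>c \<tau> (T i) t \<ge> (d + c) $ i" if tau: "min_strategy G \<tau>" for \<tau> i
  proof (cases "t \<in> T i")
    case True
    then show ?thesis using box prob_reach_in_X[OF True] unfolding unit_box_iff by auto
  next
    case False
    have "0 \<le> d $ i" "d $ i \<le> ind_vec T t $ i" using d unfolding dwc_single nonneg_vec_def by auto
    moreover have "ind_vec T t $ i = 0" using False by (simp add: ind_vec_def)
    ultimately have "d $ i = 0" by linarith
    then show ?thesis using sc(2)[OF tau] by simp
  qed
  moreover have "nonneg_vec (d + c)" using box unfolding unit_box_iff nonneg_vec_def by auto
  ultimately show ?thesis unfolding achievable_def using sc(1) by blast
qed

lemma act_sub:
  fixes T :: "'n::finite \<Rightarrow> 's set"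
  assumes sM: "s \<in> Mx" and a: "a \<in> avail G s" and y: "y \<in> act_set G T (achievable G T) s a"
  shows "y \<in> achievable G T s"
proof -
  have sS: "s \<in> S" using sM S_eq by auto
  obtain d m where d: "d \<in> dwc {ind_vec T s}" and m: "m \<in> msum_over (\<lambda>s'. sscale (pmf (trans G s a) s') (achievable G T s')) S"
    and yy: "y = d + m" and yb: "y \<in> unit_box"
    using y unfolding act_set_def msum_def by blast
  obtain f where f: "\<forall>s'\<in>S. f s' \<in> sscale (pmf (trans G s a) s') (achievable G T s')" and mf: "m = (\<Sum>s'\<in>S. f s')"
    using m unfolding msum_over_char[OF finS] by auto
  have "\<forall>s'\<in>S. \<exists>w. w \<in> achievable G T s' \<and> f s' = pmf (trans G s a) s' *\<^sub>R w"
    using f unfolding sscale_def by auto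
  then have "\<exists>w. \<forall>s'\<in>S. w s' \<in> achievable G T s' \<and> f s' = pmf (trans G s a) s' *\<^sub>R w s'"
    by (rule bchoice)
  then obtain w where w0: "\<forall>s'\<in>S. w s' \<in> achievable G T s' \<and> f s' = pmf (trans G s a) s' *\<^sub>R w s'"
    by blast
  then have w: "\<And>s'. s' \<in> S \<Longrightarrow> w s' \<in> achievable G T s'" "\<And>s'. s' \<in> S \<Longrightarrow> f s' = pmf (trans G s a) s' *\<^sub>R w s'"
    by auto
  have "\<forall>s'. \<exists>\<sigma>'. max_strategy G \<sigma>' \<and> (s' \<in> S \<longrightarrow> (\<forall>\<tau>. min_strategy G \<tau> \<longrightarrow> (\<forall>i. prob_reach G \<sigma>' \<tau> (T i) s' \<ge> w s' $ i)))"
  proof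
    fix s'
    show "\<exists>\<sigma>'. max_strategy G \<sigma>' \<and> (s' \<in> S \<longrightarrow> (\<forall>\<tau>. min_strategy G \<tau> \<longrightarrow> (\<forall>i. prob_reach G \<sigma>' \<tau> (T i) s' \<ge> w s' $ i)))"
    proof (cases "s' \<in> S")
      case True
      then show ?thesis using w(1)[OF True] unfolding achievable_def by auto
    next
      case False
      then show ?thesis using dflt_max by auto
    qed
  qed
  then have "\<exists>\<sigma>s. \<forall>s'. max_strategy G (\<sigma>s s') \<and> (s' \<in> S \<longrightarrow> (\<forall>\<tau>. min_strategy G \<tau> \<longrightarrow> (\<forall>i. prob_reach G (\<sigma>s s') \<tau> (T i) s' \<ge> w s' $ i)))"
    by (rule choice)
  then obtain \<sigma>s where ss0: "\<forall>s'. max_strategy G (\<sigma>s s') \<and> (s' \<in> S \<longrightarrow> (\<forall>\<tau>. min_strategy G \<tau> \<longrightarrow> (\<forall>i. prob_reach G (\<sigma>s s') \<tau> (T i) s' \<ge> w s' $ i)))"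
    by blast
  have ss: "\<And>s'. max_strategy G (\<sigma>s s')" using ss0 by blast
  have ssw: "\<And>s' \<tau> i. s' \<in> S \<Longrightarrow> min_strategy G \<tau> \<Longrightarrow> prob_reach G (\<sigma>s s') \<tau> (T i) s' \<ge> w s' $ i"
    using ss0 by blast
  have m0: "m \<in> achievable G T s"
  proof -
    have A1: "prob_reach G (st1 s a \<sigma>s) \<tau> (T i) s \<ge> m $ i" if tau: "min_strategy G \<tau>" and sT: "s \<notin> T i" for \<tau> i
    proof -
      have tau': "min_strategy G (\<lambda>g. \<tau> ((s, a) # g))" using shift_min[OF tau, of "[(s, a)]"] by simp
      have "m $ i = (\<Sum>s'\<in>S. pmf (trans G s a) s' * w s' $ i)" unfolding mf using w(2) by simp
      also have "\<dots> \<le> (\<Sum>s'\<in>S. pmf (trans G s a) s' * prob_reach G (\<sigma>s s') (\<lambda>g. \<tau> ((s, a) # g)) (T i) s')"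
        by (intro sum_mono mult_left_mono ssw tau') auto
      also have "\<dots> = prob_reach G (st1 s a \<sigma>s) \<tau> (T i) s"
        by (rule one_step[OF sM a ss tau sT, symmetric])
      finally show ?thesis .
    qed
    have A2: "prob_reach G (st1 s a \<sigma>s) \<tau> (T i) s \<ge> m $ i" if tau: "min_strategy G \<tau>" and sT: "s \<in> T i" for \<tau> i
    proof -
      have "m $ i \<le> y $ i"
        using yy d unfolding dwc_single nonneg_vec_def by auto
      also have "\<dots> \<le> 1" using yb unfolding unit_box_iff by auto
      finally show ?thesis using prob_reach_in_X[OF sT] by simp
    qed
    have A3: "nonneg_vec m"
    proof -
      have "0 \<le> w s' $ i" if "s' \<in> S" for s' i using ach_box[OF that w(1)[OF that]] by simp
      then show ?thesis unfolding nonneg_vec_def mf using w by (auto intro!: sum_nonneg mult_nonneg_nonneg)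
    qed
    have A4: "\<forall>\<tau>. min_strategy G \<tau> \<longrightarrow> (\<forall>i. prob_reach G (st1 s a \<sigma>s) \<tau> (T i) s \<ge> m $ i)"
    proof (intro allI impI)
      fix \<tau> i assume "min_strategy G \<tau>"
      then show "prob_reach G (st1 s a \<sigma>s) \<tau> (T i) s \<ge> m $ i" using A1 A2 by (cases "s \<in> T i") auto
    qed
    show ?thesis unfolding achievable_def mem_Collect_eq
      by (intro conjI exI[of _ "st1 s a \<sigma>s"] A3 A4 st1_max[OF a ss])
  qed
  show ?thesis unfolding yy by (rule combine_ach[OF sS m0 d]) (use yy yb in simp)
qed

lemma best_exit_sub:
  fixes T :: "'n::finite \<Rightarrow> 's set"
  assumes sM: "s \<in> Mx"
  shows "best_exit G T (achievable G T) {s} \<subseteq> achievable G T s"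
proof
  fix x assume x: "x \<in> best_exit G T (achievable G T) {s}"
  have sS: "s \<in> S" using sM S_eq by auto
  define E where "E = {(s', a) \<in> exits G {s}. s' \<in> Mx}"
  define Y where "Y = (if E = {} then {0} else (\<Union>(s', a)\<in>E. act_set G T (achievable G T) s' a))"
  have YA: "Y \<subseteq> achievable G T s"
  proof (cases "E = {}")
    case True
    then show ?thesis unfolding Y_def using zero_ach[OF sS] by auto
  next
    case False
    have "act_set G T (achievable G T) s' a \<subseteq> achievable G T s" if "(s', a) \<in> E" for s' a
      using that act_sub[OF sM] unfolding E_def exits_def by auto
    then show ?thesis unfolding Y_def using False by auto
  qed
  have hY: "convex hull Y \<subseteq> achievable G T s"
    using YA convex_achievable[OF sS, of T] by (simp add: hull_minimal)
  have "best_exit G T (achievable G T) {s} = msum (dwc {\<Sum>s\<in>{s}. ind_vec T s}) (convex hull Y) \<inter> unit_box"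
    unfolding best_exit_def Let_def Y_def E_def ..
  then have "x \<in> msum (dwc {ind_vec T s}) (convex hull Y) \<inter> unit_box" using x by simp
  then obtain d c where dc: "d \<in> dwc {ind_vec T s}" "c \<in> convex hull Y" "x = d + c" "x \<in> unit_box"
    unfolding msum_def by blast
  show "x \<in> achievable G T s" unfolding dc(3) by (rule combine_ach[OF sS]) (use dc hY in auto)
qed

end


context loopctx
begin

definition isL :: "'s \<times> 'a \<Rightarrow> bool" where "isL = (\<lambda>(t, a). t = s \<and> a \<in> L)"

definition comb :: "('a list \<Rightarrow> 'a \<Rightarrow> 's \<Rightarrow> ('s, 'a) strategy) \<Rightarrow> ('s, 'a) strategy" where
  "comb \<tau>c g t = (case dropWhile isL g of [] \<Rightarrow> dflt g t
     | x # g' \<Rightarrow> \<tau>c (map snd (takeWhile isL g)) (snd x) (start g' t) g' t)"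

lemma comb_min:
  assumes "\<And>ls b s'. min_strategy G (\<tau>c ls b s')"
  shows "min_strategy G (comb \<tau>c)"
  using assms dflt_min unfolding min_strategy_def comb_def by (auto split: list.split)

lemma comb_pre:
  assumes "set ls \<subseteq> L" "b \<notin> L"
  shows "comb \<tau>c (pre ls b @ g) t = \<tau>c ls b (start g t) g t"
proof -
  have h: "\<And>x. x \<in> set (hist ls) \<Longrightarrow> isL x" using assms(1) unfolding hist_def isL_def by auto
  have nb: "\<not> isL (s, b)" using assms(2) unfolding isL_def by auto
  have "dropWhile isL (pre ls b @ g) = (s, b) # g"
    unfolding pre_def using h nb by (simp add: dropWhile_append2)
  moreover have "takeWhile isL (pre ls b @ g) = hist ls"
    unfolding pre_def using h nb by (simp add: takeWhile_append2)
  moreover have "map snd (hist ls) = ls" unfolding hist_def by (induction ls) auto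
  ultimately show ?thesis unfolding comb_def by simp
qed

lemma Q_comb:
  assumes "set ls \<subseteq> L" "b \<notin> L"
  shows "prob_reach G (shs \<sigma> (pre ls b)) (shs (comb \<tau>c) (pre ls b)) X s' = prob_reach G (shs \<sigma> (pre ls b)) (\<tau>c ls b s') X s'"
proof -
  have "reach_within G (shs \<sigma> (pre ls b)) (shs (comb \<tau>c) (pre ls b)) X k [] s' = reach_within G (shs \<sigma> (pre ls b)) (\<tau>c ls b s') X k [] s'" for k
    by (rule reach_agree[where uu=s']) (auto simp: shs_def comb_pre[OF assms] start_def)
  then show ?thesis unfolding prob_reach_def by simp
qed

lemma LS_set: "ls \<in> LS j \<Longrightarrow> set ls \<subseteq> L" unfolding LS_def by auto
lemma B_notL: "b \<in> B \<Longrightarrow> b \<notin> L" unfolding B_def by auto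
lemma B_avail: "b \<in> B \<Longrightarrow> b \<in> avail G s" unfolding B_def by auto

lemma trans_sum1: "b \<in> B \<Longrightarrow> (\<Sum>s'\<in>S. pmf (trans G s b) s') = 1"
  by (rule sum_pmf_eq_1[OF finS trans_sub[OF sS B_avail]])

definition Wv :: "('n::finite \<Rightarrow> 's set) \<Rightarrow> 'a list \<Rightarrow> 'a \<Rightarrow> 's \<Rightarrow> real ^'n" where
  "Wv T ls b s' = (\<chi> i. Inf ((\<lambda>\<tau>. prob_reach G (shs \<sigma> (pre ls b)) \<tau> (T i) s') ` {\<tau>. min_strategy G \<tau>}))"

lemma shs_max: "max_strategy G (shs \<sigma> p)" unfolding shs_def by (rule shift_max[OF sig])

lemma Wv_facts:
  fixes T :: "'n::finite \<Rightarrow> 's set"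
  assumes s': "s' \<in> S"
  shows "Wv T ls b s' \<in> achievable G T s'" "0 \<le> Wv T ls b s' $ i" "Wv T ls b s' $ i \<le> 1"
    "\<And>\<tau>. min_strategy G \<tau> \<Longrightarrow> Wv T ls b s' $ i \<le> prob_reach G (shs \<sigma> (pre ls b)) \<tau> (T i) s'"
    "\<epsilon> > 0 \<Longrightarrow> \<exists>\<tau>. min_strategy G \<tau> \<and> prob_reach G (shs \<sigma> (pre ls b)) \<tau> (T i) s' < Wv T ls b s' $ i + \<epsilon>"
proof -
  let ?F = "\<lambda>i. (\<lambda>\<tau>. prob_reach G (shs \<sigma> (pre ls b)) \<tau> (T i) s') ` {\<tau>. min_strategy G \<tau>}"
  have ne: "?F i \<noteq> {}" for i using dflt_min by auto
  have bd: "bdd_below (?F i)" for i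
    using prob_reach_bounds[OF shs_max _ s'] by (auto intro!: bdd_belowI[where m=0])
  have W: "Wv T ls b s' $ i = Inf (?F i)" for i unfolding Wv_def by simp
  have lo: "Wv T ls b s' $ i \<le> prob_reach G (shs \<sigma> (pre ls b)) \<tau> (T i) s'" if "min_strategy G \<tau>" for \<tau> i
    unfolding W by (rule cInf_lower[OF _ bd]) (use that in auto)
  show "\<And>\<tau>. min_strategy G \<tau> \<Longrightarrow> Wv T ls b s' $ i \<le> prob_reach G (shs \<sigma> (pre ls b)) \<tau> (T i) s'"
    by (rule lo)
  have nn: "0 \<le> Wv T ls b s' $ i" for i
    unfolding W by (rule cInf_greatest[OF ne]) (use prob_reach_bounds[OF shs_max _ s'] in auto)
  show "0 \<le> Wv T ls b s' $ i" by (rule nn)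
  show "Wv T ls b s' $ i \<le> 1" using lo[OF dflt_min, of i] prob_reach_bounds[OF shs_max[of "pre ls b"] dflt_min s', of "T i"] by linarith
  show "Wv T ls b s' \<in> achievable G T s'"
    unfolding achievable_def nonneg_vec_def using nn lo shs_max by blast
  assume "\<epsilon> > 0"
  then have "Inf (?F i) < Wv T ls b s' $ i + \<epsilon>" unfolding W by simp
  then obtain x where "x \<in> ?F i" "x < Wv T ls b s' $ i + \<epsilon>" using cInf_lessD[OF ne] by blast
  then show "\<exists>\<tau>. min_strategy G \<tau> \<and> prob_reach G (shs \<sigma> (pre ls b)) \<tau> (T i) s' < Wv T ls b s' $ i + \<epsilon>"
    by auto
qed

definition Yv :: "('n::finite \<Rightarrow> 's set) \<Rightarrow> 'a list \<Rightarrow> real ^'n" where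
  "Yv T ls = (\<Sum>b\<in>B. pa ls b *\<^sub>R (\<Sum>s'\<in>S. pmf (trans G s b) s' *\<^sub>R Wv T ls b s'))"

definition ZK :: "('n::finite \<Rightarrow> 's set) \<Rightarrow> nat \<Rightarrow> real ^'n" where
  "ZK T K = (\<Sum>j<K. \<Sum>ls\<in>LS j. P ls *\<^sub>R Yv T ls)"

lemma Yv_comp: "Yv T ls $ i = (\<Sum>b\<in>B. pa ls b * (\<Sum>s'\<in>S. pmf (trans G s b) s' * Wv T ls b s' $ i))"
  unfolding Yv_def by simp

lemma Yv_bounds: "0 \<le> Yv T ls $ i \<and> Yv T ls $ i \<le> ex ls"
proof -
  have w: "0 \<le> Wv T ls b s' $ i \<and> Wv T ls b s' $ i \<le> 1" if "s' \<in> S" for b s' using Wv_facts[OF that] by auto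
  have "(\<Sum>s'\<in>S. pmf (trans G s b) s' * Wv T ls b s' $ i) \<le> 1" if "b \<in> B" for b
  proof -
    have "(\<Sum>s'\<in>S. pmf (trans G s b) s' * Wv T ls b s' $ i) \<le> (\<Sum>s'\<in>S. pmf (trans G s b) s')"
      using w by (intro sum_mono) (auto intro: mult_left_le)
    then show ?thesis using trans_sum1[OF that] by simp
  qed
  then have "Yv T ls $ i \<le> (\<Sum>b\<in>B. pa ls b)" unfolding Yv_comp
    by (intro sum_mono) (auto intro: mult_left_le pa_nonneg)
  moreover have "0 \<le> Yv T ls $ i" unfolding Yv_comp using w by (auto intro!: sum_nonneg mult_nonneg_nonneg pa_nonneg)
  ultimately show ?thesis unfolding ex_def by simp
qed

lemma ZK_comp: "ZK T K $ i = (\<Sum>j<K. \<Sum>ls\<in>LS j. P ls * Yv T ls $ i)"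
  unfolding ZK_def by simp

lemma ZK_incseq: "incseq (\<lambda>K. ZK T K $ i)"
  unfolding incseq_Suc_iff ZK_comp using Yv_bounds[THEN conjunct1] P_nonneg by (auto intro!: sum_nonneg mult_nonneg_nonneg)

lemma ZK_le1: "ZK T K $ i \<le> 1"
proof -
  have "ZK T K $ i \<le> (\<Sum>j<K. \<Sum>ls\<in>LS j. P ls * ex ls)" unfolding ZK_comp
    using Yv_bounds P_nonneg by (intro sum_mono mult_left_mono) auto
  then show ?thesis using mass_le[of K] by linarith
qed

definition "Zlim T = (\<chi> i. SUP K. ZK T K $ i)"

lemma ZK_lim: "ZK T \<longlonglongrightarrow> Zlim T"
proof (rule vec_tendstoI)
  fix i
  show "(\<lambda>K. ZK T K $ i) \<longlonglongrightarrow> Zlim T $ i"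
    unfolding Zlim_def vec_lambda_beta
    by (rule LIMSEQ_incseq_SUP[OF _ ZK_incseq]) (use ZK_le1 in \<open>auto intro!: bdd_aboveI[where M=1]\<close>)
qed

lemma ZK_le_Zlim: "ZK T K $ i \<le> Zlim T $ i"
  unfolding Zlim_def using ZK_le1 by (auto intro!: cSUP_upper bdd_aboveI[where M=1])

lemma v_le_Zlim:
  fixes T :: "'n::finite \<Rightarrow> 's set"
  assumes v: "\<And>\<tau>. min_strategy G \<tau> \<Longrightarrow> prob_reach G \<sigma> \<tau> (T i) s \<ge> v"
    and sT: "s \<notin> T i"
  shows "v \<le> Zlim T $ i"
proof (rule field_le_epsilon)
  fix \<epsilon> :: real assume eps: "0 < \<epsilon>"
  define \<tau>c where "\<tau>c ls b s' = (if s' \<in> S then (SOME \<tau>. min_strategy G \<tau> \<and> prob_reach G (shs \<sigma> (pre ls b)) \<tau> (T i) s' < Wv T ls b s' $ i + \<epsilon>) else dflt)" for ls b s'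
  have tc: "min_strategy G (\<tau>c ls b s') \<and> (s' \<in> S \<longrightarrow> prob_reach G (shs \<sigma> (pre ls b)) (\<tau>c ls b s') (T i) s' < Wv T ls b s' $ i + \<epsilon>)" for ls b s'
  proof (cases "s' \<in> S")
    case True
    show ?thesis unfolding \<tau>c_def using True someI_ex[OF Wv_facts(5)[OF True eps, where T=T and ls=ls and b=b and i=i]] by simp
  next
    case False
    then show ?thesis unfolding \<tau>c_def using dflt_min by simp
  qed
  define \<tau> where "\<tau> = comb \<tau>c"
  have tau: "min_strategy G \<tau>" unfolding \<tau>_def by (rule comb_min) (use tc in blast)
  have X: "Xv \<tau> (T i) ls \<le> Yv T ls $ i + \<epsilon> * ex ls" if ls: "ls \<in> LS j" for j ls
  proof -
    have le: "prob_reach G (shs \<sigma> (pre ls b)) (shs \<tau> (pre ls b)) (T i) s' \<le> Wv T ls b s' $ i + \<epsilon>"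
      if b: "b \<in> B" and s': "s' \<in> S" for b s'
    proof -
      have "prob_reach G (shs \<sigma> (pre ls b)) (shs \<tau> (pre ls b)) (T i) s' = prob_reach G (shs \<sigma> (pre ls b)) (\<tau>c ls b s') (T i) s'"
        unfolding \<tau>_def by (rule Q_comb[OF LS_set[OF ls] B_notL[OF b]])
      also have "\<dots> \<le> Wv T ls b s' $ i + \<epsilon>" using tc[of ls b s'] s' by simp
      finally show ?thesis .
    qed
    have "Xv \<tau> (T i) ls \<le> (\<Sum>b\<in>B. pa ls b * (\<Sum>s'\<in>S. pmf (trans G s b) s' * (Wv T ls b s' $ i + \<epsilon>)))"
      unfolding Xv_def
      by (intro sum_mono mult_left_mono[OF _ pa_nonneg]) (auto intro!: mult_left_mono le)
    also have "\<dots> = Yv T ls $ i + \<epsilon> * ex ls"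
    proof -
      have "(\<Sum>s'\<in>S. pmf (trans G s b) s' * (Wv T ls b s' $ i + \<epsilon>)) = (\<Sum>s'\<in>S. pmf (trans G s b) s' * Wv T ls b s' $ i) + \<epsilon>"
        if "b \<in> B" for b
      proof -
        have "(\<Sum>s'\<in>S. pmf (trans G s b) s' * (Wv T ls b s' $ i + \<epsilon>)) = (\<Sum>s'\<in>S. pmf (trans G s b) s' * Wv T ls b s' $ i) + \<epsilon> * (\<Sum>s'\<in>S. pmf (trans G s b) s')"
          by (simp add: distrib_left sum.distrib sum_distrib_left mult.commute)
        then show ?thesis using trans_sum1[OF that] by simp
      qed
      then have "(\<Sum>b\<in>B. pa ls b * (\<Sum>s'\<in>S. pmf (trans G s b) s' * (Wv T ls b s' $ i + \<epsilon>)))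
         = (\<Sum>b\<in>B. pa ls b * (\<Sum>s'\<in>S. pmf (trans G s b) s' * Wv T ls b s' $ i) + \<epsilon> * pa ls b)"
        by (intro sum.cong refl) (simp add: distrib_left mult.commute)
      then show ?thesis unfolding Yv_comp ex_def by (simp only: sum.distrib sum_distrib_left)
    qed
    finally show ?thesis .
  qed
  have "prob_reach G \<sigma> \<tau> (T i) s \<le> Zlim T $ i + \<epsilon>"
    unfolding prob_reach_def
  proof (rule cSUP_least)
    fix K
    have "reach_within G \<sigma> \<tau> (T i) K [] s \<le> (\<Sum>j<K. \<Sum>ls\<in>LS j. P ls * Xv \<tau> (T i) ls)"
      by (rule reach_bound[OF tau sT])
    also have "\<dots> \<le> (\<Sum>j<K. \<Sum>ls\<in>LS j. P ls * (Yv T ls $ i + \<epsilon> * ex ls))"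
      using X P_nonneg by (intro sum_mono mult_left_mono) auto
    also have "\<dots> = (\<Sum>j<K. \<Sum>ls\<in>LS j. P ls * Yv T ls $ i) + (\<Sum>j<K. \<Sum>ls\<in>LS j. \<epsilon> * (P ls * ex ls))"
      by (simp only: distrib_left sum.distrib mult.left_commute)
    also have "\<dots> = ZK T K $ i + \<epsilon> * (\<Sum>j<K. \<Sum>ls\<in>LS j. P ls * ex ls)"
      unfolding ZK_comp by (simp only: sum_distrib_left)
    also have "\<dots> \<le> Zlim T $ i + \<epsilon>"
    proof -
      have "\<epsilon> * (\<Sum>j<K. \<Sum>ls\<in>LS j. P ls * ex ls) \<le> \<epsilon>" using mass_le[of K] eps by (intro mult_left_le) auto
      then show ?thesis using ZK_le_Zlim[of T K i] by linarith
    qed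
    finally show "reach_within G \<sigma> \<tau> (T i) K [] s \<le> Zlim T $ i + \<epsilon>" .
  qed simp
  then show "v \<le> Zlim T $ i + \<epsilon>" using v[OF tau] by linarith
qed

end


context game
begin

lemma ach_down:
  assumes "x \<in> achievable G T t" "\<And>i. 0 \<le> y $ i" "\<And>i. y $ i \<le> x $ i"
  shows "y \<in> achievable G T t"
proof -
  obtain \<sigma> where s: "max_strategy G \<sigma>" "\<forall>\<tau>. min_strategy G \<tau> \<longrightarrow> (\<forall>i. x $ i \<le> prob_reach G \<sigma> \<tau> (T i) t)"
    using assms(1) unfolding achievable_def by auto
  have "\<forall>\<tau>. min_strategy G \<tau> \<longrightarrow> (\<forall>i. y $ i \<le> prob_reach G \<sigma> \<tau> (T i) t)"
    using s(2) assms(3) order_trans by blast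
  then show ?thesis unfolding achievable_def nonneg_vec_def using s(1) assms(2) by blast
qed

lemma zero_act:
  fixes T :: "'n::finite \<Rightarrow> 's set"
  assumes s: "s \<in> S" and a: "a \<in> avail G s"
  shows "0 \<in> act_set G T (achievable G T) s a"
proof -
  have "(\<Sum>s'\<in>S. (0::real^'n)) \<in> msum_over (\<lambda>s'. sscale (pmf (trans G s a) s') (achievable G T s')) S"
    unfolding msum_over_char[OF finS] sscale_def using zero_ach by force
  moreover have "(0::real^'n) \<in> dwc {ind_vec T s}"
    unfolding dwc_single nonneg_vec_def ind_vec_def by auto
  moreover have "(0::real^'n) \<in> unit_box" unfolding unit_box_iff by auto
  ultimately show ?thesis unfolding act_set_def msum_def by force
qed

end

context loopctx
begin

definition cm :: "real ^'n \<Rightarrow> real ^'n \<Rightarrow> real ^'n" where "cm \<rho> x = (\<chi> i. \<rho> $ i * x $ i)"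

definition "TT K = (\<Sum>j<K. \<Sum>ls\<in>LS j. P ls * ex ls)"
definition "Tot = (SUP K. TT K)"

lemma ex_nonneg: "0 \<le> ex ls" unfolding ex_def by (auto intro!: sum_nonneg pa_nonneg)

lemma TT_lim: "TT \<longlonglongrightarrow> Tot" and Tot_le: "Tot \<le> 1"
proof -
  have inc: "incseq TT" unfolding incseq_Suc_iff TT_def
    using P_nonneg ex_nonneg by (auto intro!: sum_nonneg mult_nonneg_nonneg)
  have bd: "TT K \<le> 1" for K unfolding TT_def by (rule mass_le)
  show "TT \<longlonglongrightarrow> Tot" unfolding Tot_def
    by (rule LIMSEQ_incseq_SUP[OF _ inc]) (use bd in \<open>auto intro!: bdd_aboveI[where M=1]\<close>)
  show "Tot \<le> 1" unfolding Tot_def using bd by (auto intro!: cSUP_least)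
qed

definition IK :: "nat \<Rightarrow> (nat \<times> 'a list \<times> 'a) option set" where
  "IK K = insert None (Some ` (SIGMA j:{..<K}. LS j \<times> B))"

lemma finIK: "finite (IK K)" unfolding IK_def using finLS finB by auto

lemma monoIK: "mono IK" unfolding mono_def IK_def by auto

lemma sum_IK:
  fixes f :: "(nat \<times> 'a list \<times> 'a) option \<Rightarrow> 'v::comm_monoid_add"
  shows "(\<Sum>x\<in>IK K. f x) = f None + (\<Sum>j<K. \<Sum>ls\<in>LS j. \<Sum>b\<in>B. f (Some (j, ls, b)))"
proof -
  have fin: "finite (SIGMA j:{..<K}. LS j \<times> B)" using finLS finB by auto
  have "(\<Sum>x\<in>IK K. f x) = f None + (\<Sum>x\<in>Some ` (SIGMA j:{..<K}. LS j \<times> B). f x)"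
    unfolding IK_def using fin by (subst sum.insert) auto
  also have "(\<Sum>x\<in>Some ` (SIGMA j:{..<K}. LS j \<times> B). f x) = (\<Sum>x\<in>(SIGMA j:{..<K}. LS j \<times> B). f (Some x))"
    by (subst sum.reindex) auto
  also have "\<dots> = (\<Sum>j<K. \<Sum>y\<in>LS j \<times> B. f (Some (j, y)))"
  proof -
    have "(\<Sum>j<K. \<Sum>y\<in>LS j \<times> B. f (Some (j, y))) = (\<Sum>x\<in>(SIGMA j:{..<K}. LS j \<times> B). (\<lambda>(j, y). f (Some (j, y))) x)"
      by (rule sum.Sigma) (use finLS finB in auto)
    then show ?thesis by (simp add: split_def)
  qed
  also have "\<dots> = (\<Sum>j<K. \<Sum>ls\<in>LS j. \<Sum>b\<in>B. f (Some (j, ls, b)))"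
    by (simp add: sum.cartesian_product)
  finally show ?thesis .
qed

lemma exit_E:
  assumes b: "b \<in> B"
  shows "(s, b) \<in> {(s', a) \<in> exits G {s}. s' \<in> Mx}"
proof -
  have "\<not> set_pmf (trans G s b) \<subseteq> {s}" using b unfolding B_def L_def by auto
  then obtain x where "x \<in> set_pmf (trans G s b)" "x \<noteq> s" by auto
  then have "pmf (trans G s b) x > 0" "x \<notin> {s}" by (auto simp: set_pmf_iff pmf_positive)
  then show ?thesis using b sM unfolding exits_def B_def by auto
qed

lemma v_in_best_exit:
  fixes T :: "'n::finite \<Rightarrow> 's set"
  assumes v: "\<And>\<tau> i. min_strategy G \<tau> \<Longrightarrow> prob_reach G \<sigma> \<tau> (T i) s \<ge> v $ i" and vn: "nonneg_vec v"
  shows "v \<in> best_exit G T (achievable G T) {s}"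
proof -
  define E where "E = {(s', a) \<in> exits G {s}. s' \<in> Mx}"
  define Y where "Y = (if E = {} then {0} else (\<Union>(s', a)\<in>E. act_set G T (achievable G T) s' a))"
  have vA: "v \<in> achievable G T s" unfolding achievable_def using vn v sig by blast
  have vle: "s \<notin> T i \<Longrightarrow> v $ i \<le> Zlim T $ i" for i by (rule v_le_Zlim[OF v])
  have Z0: "0 \<le> Zlim T $ i" for i using ZK_le_Zlim[of T 0 i] by (simp add: ZK_def)
  have v0: "0 \<le> v $ i" "v $ i \<le> 1" for i using ach_box[OF sS vA] by auto
  define \<rho> :: "real ^'n" where "\<rho> = (\<chi> i. if s \<in> T i \<or> Zlim T $ i = 0 then 0 else v $ i / Zlim T $ i)"
  define c :: "real ^'n" where "c = (\<chi> i. if s \<in> T i then 0 else v $ i)"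
  have rho: "0 \<le> \<rho> $ i \<and> \<rho> $ i \<le> 1" for i
  proof (cases "s \<in> T i \<or> Zlim T $ i = 0")
    case True then show ?thesis unfolding \<rho>_def by simp
  next
    case False
    then have Zp: "0 < Zlim T $ i" and sT: "s \<notin> T i" using Z0[of i] by auto
    have "\<rho> $ i = v $ i / Zlim T $ i" unfolding \<rho>_def using False by simp
    then show ?thesis using Zp vle[OF sT] v0[of i] by (simp add: divide_le_eq_1_pos)
  qed
  have rhoZ: "cm \<rho> (Zlim T) = c"
  proof -
    have "\<rho> $ i * Zlim T $ i = c $ i" for i
    proof (cases "s \<in> T i")
      case True then show ?thesis unfolding \<rho>_def c_def by simp
    next
      case False
      then show ?thesis using vle[OF False] v0[of i] unfolding \<rho>_def c_def by auto
    qed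
    then show ?thesis unfolding cm_def by (simp add: vec_eq_iff)
  qed
  define yb where "yb ls b = (\<Sum>s'\<in>S. pmf (trans G s b) s' *\<^sub>R cm \<rho> (Wv T ls b s'))" for ls b
  have yb_act: "yb ls b \<in> act_set G T (achievable G T) s b" if b: "b \<in> B" for ls b
  proof -
    have cw: "cm \<rho> (Wv T ls b s') \<in> achievable G T s'" if s': "s' \<in> S" for s'
    proof (rule ach_down[OF Wv_facts(1)[OF s']])
      fix i
      show "0 \<le> cm \<rho> (Wv T ls b s') $ i" unfolding cm_def using rho[of i] Wv_facts(2)[OF s', of T ls b i] by simp
      show "cm \<rho> (Wv T ls b s') $ i \<le> Wv T ls b s' $ i" unfolding cm_def using rho[of i] Wv_facts(2)[OF s', of T ls b i]
        by (simp add: mult_left_le_one_le)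
    qed
    have m: "yb ls b \<in> msum_over (\<lambda>s'. sscale (pmf (trans G s b) s') (achievable G T s')) S"
      unfolding msum_over_char[OF finS] sscale_def yb_def using cw by blast
    have box: "yb ls b \<in> unit_box"
      unfolding unit_box_iff
    proof
      fix i
      have w: "0 \<le> \<rho> $ i * Wv T ls b s' $ i \<and> \<rho> $ i * Wv T ls b s' $ i \<le> 1" if "s' \<in> S" for s'
        using rho[of i] Wv_facts(2,3)[OF that, of T ls b i] by (auto intro: mult_le_one)
      have "yb ls b $ i = (\<Sum>s'\<in>S. pmf (trans G s b) s' * (\<rho> $ i * Wv T ls b s' $ i))"
        unfolding yb_def cm_def by simp
      moreover have "(\<Sum>s'\<in>S. pmf (trans G s b) s' * (\<rho> $ i * Wv T ls b s' $ i)) \<le> (\<Sum>s'\<in>S. pmf (trans G s b) s')"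
        using w by (intro sum_mono) (auto intro: mult_left_le)
      moreover have "0 \<le> (\<Sum>s'\<in>S. pmf (trans G s b) s' * (\<rho> $ i * Wv T ls b s' $ i))"
        using w by (auto intro!: sum_nonneg)
      ultimately show "0 \<le> yb ls b $ i \<and> yb ls b $ i \<le> 1" using trans_sum1[OF b] by simp
    qed
    have d0: "(0::real^'n) \<in> dwc {ind_vec T s}" unfolding dwc_single nonneg_vec_def ind_vec_def by auto
    show ?thesis unfolding act_set_def msum_def using m box d0 by force
  qed
  have zY: "0 \<in> Y"
  proof (cases "E = {}")
    case True then show ?thesis unfolding Y_def by simp
  next
    case False
    then obtain s' a where sa: "(s', a) \<in> E" by auto
    then have "s' = s" "a \<in> avail G s" unfolding E_def exits_def by auto
    then have "0 \<in> act_set G T (achievable G T) s' a" using zero_act[OF sS, of a T] by simp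
    then show ?thesis using sa False unfolding Y_def by auto
  qed
  have ybY: "yb ls b \<in> Y" if "b \<in> B" for ls b
  proof -
    have "(s, b) \<in> E" unfolding E_def by (rule exit_E[OF that])
    then show ?thesis unfolding Y_def using yb_act[OF that] by auto
  qed
  define q where "q (x :: (nat \<times> 'a list \<times> 'a) option) = (case x of None \<Rightarrow> 1 - Tot | Some (j, ls, b) \<Rightarrow> P ls * pa ls b)" for x
  define cc where "cc (x :: (nat \<times> 'a list \<times> 'a) option) = (case x of None \<Rightarrow> 0 | Some (j, ls, b) \<Rightarrow> if b \<in> B then yb ls b else 0)" for x
  have cY: "cc x \<in> convex hull Y" for x
    unfolding cc_def using zY ybY by (auto split: option.split intro: hull_inc)
  have qn: "0 \<le> q x" for x
    unfolding q_def using Tot_le P_nonneg pa_nonneg by (auto split: option.split intro!: mult_nonneg_nonneg)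
  have Ssum: "(\<Sum>x\<in>IK K. q x) = (1 - Tot) + TT K" for K
    unfolding sum_IK TT_def q_def ex_def by (simp add: sum_distrib_left)
  have Slim: "(\<lambda>K. \<Sum>x\<in>IK K. q x) \<longlonglongrightarrow> 1"
    unfolding Ssum using tendsto_add[OF tendsto_const TT_lim, of "1 - Tot"] by simp
  have Zsum: "(\<Sum>x\<in>IK K. q x *\<^sub>R cc x) = cm \<rho> (ZK T K)" for K
  proof -
    have "(\<Sum>x\<in>IK K. q x *\<^sub>R cc x) $ i = cm \<rho> (ZK T K) $ i" for i
    proof -
      have "(\<Sum>x\<in>IK K. q x *\<^sub>R cc x) $ i = (\<Sum>j<K. \<Sum>ls\<in>LS j. \<Sum>b\<in>B. P ls * pa ls b * yb ls b $ i)"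
        unfolding sum_IK q_def cc_def by simp
      also have "\<dots> = (\<Sum>j<K. \<Sum>ls\<in>LS j. \<Sum>b\<in>B. P ls * pa ls b * (\<Sum>s'\<in>S. pmf (trans G s b) s' * (\<rho> $ i * Wv T ls b s' $ i)))"
        unfolding yb_def cm_def by simp
      also have "\<dots> = \<rho> $ i * (\<Sum>j<K. \<Sum>ls\<in>LS j. P ls * (\<Sum>b\<in>B. pa ls b * (\<Sum>s'\<in>S. pmf (trans G s b) s' * Wv T ls b s' $ i)))"
        by (simp add: sum_distrib_left mult_ac)
      also have "\<dots> = cm \<rho> (ZK T K) $ i"
        unfolding cm_def ZK_comp Yv_comp by simp
      finally show ?thesis .
    qed
    then show ?thesis by (simp add: vec_eq_iff)
  qed
  have Zlim': "(\<lambda>K. \<Sum>x\<in>IK K. q x *\<^sub>R cc x) \<longlonglongrightarrow> cm \<rho> (Zlim T)"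
    unfolding Zsum cm_def by (intro tendsto_intros tendsto_vec_nth ZK_lim)
  have cinY: "c \<in> convex hull Y"
    unfolding rhoZ[symmetric]
    by (rule sigma_convex[OF convex_convex_hull finIK monoIK qn cY Slim Zlim'])
  define d :: "real ^'n" where "d = (\<chi> i. if s \<in> T i then v $ i else 0)"
  have vdc: "v = d + c" unfolding d_def c_def by (simp add: vec_eq_iff)
  have d: "d \<in> dwc {ind_vec T s}" unfolding dwc_single nonneg_vec_def d_def ind_vec_def using v0 by auto
  have "best_exit G T (achievable G T) {s} = msum (dwc {\<Sum>s\<in>{s}. ind_vec T s}) (convex hull Y) \<inter> unit_box"
    unfolding best_exit_def Let_def Y_def E_def ..
  moreover have "v \<in> msum (dwc {ind_vec T s}) (convex hull Y) \<inter> unit_box"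
    unfolding msum_def using vdc d cinY ach_box'[OF sS vA] by blast
  ultimately show ?thesis by simp
qed

end

theorem lemmaA1:
  fixes G :: "('s, 'a) sgame" and T :: "'n::finite \<Rightarrow> 's set" and s :: 's
  assumes "wf_game G"
    and "\<forall>i. T i \<subseteq> states G"
    and "s \<in> max_states G"
  shows "best_exit G T (achievable G T) {s} = achievable G T s"
proof -
  interpret game G by unfold_locales (rule assms(1))
  show ?thesis
  proof
    show "best_exit G T (achievable G T) {s} \<subseteq> achievable G T s"
      by (rule best_exit_sub[OF assms(3)])
    show "achievable G T s \<subseteq> best_exit G T (achievable G T) {s}"
    proof
      fix v assume "v \<in> achievable G T s"
      then obtain \<sigma> where sg: "max_strategy G \<sigma>" "nonneg_vec v"
        "\<forall>\<tau>. min_strategy G \<tau> \<longrightarrow> (\<forall>i. prob_reach G \<sigma> \<tau> (T i) s \<ge> v $ i)"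
        unfolding achievable_def by auto
      interpret lc: loopctx G s \<sigma> by unfold_locales (use assms(3) sg(1) in auto)
      show "v \<in> best_exit G T (achievable G T) {s}"
        by (rule lc.v_in_best_exit) (use sg in auto)
    qed
  qed
qed

end
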